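(* Fix an integer $s\ge2$. Let $(\mathbb{G}_n)_{n\ge1}$ be a sequence of random graphs, $\mathbb{G}_n$ on $n$ vertices, and let $\mathbf{c}_n(s)=(c_{1,n},\ldots,c_{s,n})$ be compositions of $n$ into $s$ positive parts such that the color distribution $n^{-1}\mathbf{c}_n(s)$ is bounded away from both the boundary and the center $\boldsymbol{\upsilon}_s=s^{-1}\mathbf{1}_s$ of the standard simplex $\Delta_s$ (i.e. $\liminf_n\min_i c_{i,n}/n>0$ and $\liminf_n\|n^{-1}\mathbf{c}_n(s)-\boldsymbol{\upsilon}_s\|>0$). Given $\mathbb{G}_n$, color it by a uniformly random $\mathbf{c}_n(s)$-coloring, and let $M(\mathbb{G}_n)$ be the number of edges whose two ends receive the same color. Let $\mathsf{m}(\mathbb{G}_n)$ denote the number of edges of $\mathbb{G}_n$ and $\Sigma_2(\mathbb{G}_n)$ the sum of squared degrees of $\mathbb{G}_n$, and $\zeta(\mathbb{G}_n)=\sqrt{\Sigma_2(\mathbb{G}_n)}/\mathsf{m}(\mathbb{G}_n)$. Assume ( * ) $\mathbb{E}(\mathsf{m}(\mathbb{G}_n))$ is bounded away from zero and $\mathsf{m}(\mathbb{G}_n)/\mathbb{E}(\mathsf{m}(\mathbb{G}_n))\to 1$ in quadratic mean. Then $M(\mathbb{G}_n)$ concentrates around its mean (i.e. $M(\mathbb{G}_n)/\mathbb{E}[M(\mathbb{G}_n)]\to1$ in probability) if and only if $$\frac{\mathbb{E}[\Sigma_2(\mathbb{G}_n)]}{\big[\mathbb{E}[\mathsf{m}(\mathbb{G}_n)]\big]^2}\to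 0,$$ and moreover this condition is equivalent to $\zeta(\mathbb{G}_n)\to 0$ in probability.
   Context: A $\mathbf{c}$-coloring of an $n$-vertex graph $G$, for a composition $\mathbf{c}=(c_1,\ldots,c_s)$ of $n$, is a surjective map $f:V(G)\to[s]$ with $|f^{-1}(i)|=c_i$ for all $i$; the set of such colorings carries the uniform probability measure. The standard simplex is $\Delta_s=\{x\in\mathbb{R}^s_{\ge0}:\sum_i x_i=1\}$ and $\|\cdot\|$ is the Euclidean norm. *)

theory Defs
  imports "HOL-Probability.Probability" "HOL-Library.FuncSet"
begin

definition simple_graphs :: "nat \<Rightarrow> nat set set set" where
  "simple_graphs n = {E. E \<subseteq> {e. \<exists>u v. u < n \<and> v < n \<and> u \<noteq> v \<and> e = {u, v}}}"

definition num_edges :: "nat set set \<Rightarrow> real" where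
  "num_edges E = real (card E)"

definition degree :: "nat set set \<Rightarrow> nat \<Rightarrow> nat" where
  "degree E v = card {e \<in> E. v \<in> e}"

definition Sigma2 :: "nat \<Rightarrow> nat set set \<Rightarrow> real" where
  "Sigma2 n E = (\<Sum>v<n. real (degree E v) ^ 2)"

definition zeta :: "nat \<Rightarrow> nat set set \<Rightarrow> real" where
  "zeta n E = sqrt (Sigma2 n E) / num_edges E"

definition is_composition :: "nat \<Rightarrow> nat \<Rightarrow> (nat \<Rightarrow> nat) \<Rightarrow> bool" where
  "is_composition n s c \<longleftrightarrow> (\<forall>i<s. c i > 0) \<and> (\<Sum>i<s. c i) = n"

definition colorings :: "nat \<Rightarrow> nat \<Rightarrow> (nat \<Rightarrow> nat) \<Rightarrow> (nat \<Rightarrow> nat) set" where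
  "colorings n s c = {f \<in> {..<n} \<rightarrow>\<^sub>E {..<s}. f ` {..<n} = {..<s} \<and>
      (\<forall>i<s. card {v \<in> {..<n}. f v = i} = c i)}"

definition mono_edges :: "nat set set \<Rightarrow> (nat \<Rightarrow> nat) \<Rightarrow> real" where
  "mono_edges E f = real (card {e \<in> E. \<exists>u v. e = {u, v} \<and> f u = f v})"

definition colored_graph :: "nat set set pmf \<Rightarrow> nat \<Rightarrow> nat \<Rightarrow> (nat \<Rightarrow> nat) \<Rightarrow> (nat set set \<times> (nat \<Rightarrow> nat)) pmf" where
  "colored_graph G n s c = bind_pmf G (\<lambda>E. map_pmf (\<lambda>f. (E, f)) (pmf_of_set (colorings n s c)))"

definition conv_in_prob :: "(nat \<Rightarrow> 'a pmf) \<Rightarrow> (nat \<Rightarrow> 'a \<Rightarrow> real) \<Rightarrow> real \<Rightarrow> bool" where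
  "conv_in_prob P X a \<longleftrightarrow>
     (\<forall>\<epsilon>>0. (\<lambda>n. measure_pmf.prob (P n) {x. \<bar>X n x - a\<bar> > \<epsilon>}) \<longlonglongrightarrow> 0)"

definition conv_quad_mean :: "(nat \<Rightarrow> 'a pmf) \<Rightarrow> (nat \<Rightarrow> 'a \<Rightarrow> real) \<Rightarrow> real \<Rightarrow> bool" where
  "conv_quad_mean P X a \<longleftrightarrow>
     (\<lambda>n. measure_pmf.expectation (P n) (\<lambda>x. (X n x - a) ^ 2)) \<longlonglongrightarrow> 0"

end

theory Submission
  imports Defs
begin


lemma col_exists:
  fixes s n :: nat and c :: "nat \<Rightarrow> nat"
  shows "(\<Sum>i<s. c i) = n \<Longrightarrow> \<exists>f\<in>{..<n} \<rightarrow>\<^sub>E {..<s}. \<forall>i<s. card {v\<in>{..<n}. f v = i} = c i"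
proof (induction s arbitrary: n)
  case 0
  then show ?case by (auto intro!: bexI[of _ "\<lambda>_. undefined"])
next
  case (Suc s)
  define n' where "n' = (\<Sum>i<s. c i)"
  have nn: "n = n' + c s" using Suc.prems by (simp add: n'_def)
  obtain f' where f': "f' \<in> {..<n'} \<rightarrow>\<^sub>E {..<s}" "\<forall>i<s. card {v\<in>{..<n'}. f' v = i} = c i"
    using Suc.IH[of n'] n'_def by auto
  define f where "f v = (if v < n' then f' v else if v < n then s else undefined)" for v
  have "f \<in> {..<n} \<rightarrow>\<^sub>E {..<Suc s}"
    using f'(1) by (auto simp: f_def PiE_def Pi_def nn extensional_def)
  moreover have "card {v\<in>{..<n}. f v = i} = c i" if "i < Suc s" for i
  proof (cases "i < s")
    case True
    have "{v\<in>{..<n}. f v = i} = {v\<in>{..<n'}. f' v = i}"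
      using True f'(1) by (auto simp: f_def nn PiE_def Pi_def)
    then show ?thesis using f'(2) True by simp
  next
    case False
    then have "i = s" using that by simp
    have "{v\<in>{..<n}. f v = i} = {n'..<n}"
      using f'(1) \<open>i = s\<close> by (auto simp: f_def nn PiE_def Pi_def; metis leI less_irrefl)
    then show ?thesis using \<open>i = s\<close> nn by simp
  qed
  ultimately show ?case by blast
qed

lemma colorings_nonempty:
  assumes "is_composition n s c" shows "colorings n s c \<noteq> {}"
proof -
  obtain f where f: "f \<in> {..<n} \<rightarrow>\<^sub>E {..<s}" "\<forall>i<s. card {v\<in>{..<n}. f v = i} = c i"
    using col_exists[where s=s and n=n and c=c] assms by (auto simp: is_composition_def)
  have "f ` {..<n} = {..<s}"
  proof
    show "f ` {..<n} \<subseteq> {..<s}" using f(1) by auto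
    show "{..<s} \<subseteq> f ` {..<n}"
    proof
      fix i assume "i \<in> {..<s}"
      then have "card {v\<in>{..<n}. f v = i} > 0" using f(2) assms by (auto simp: is_composition_def)
      then obtain v where "v \<in> {..<n}" "f v = i" by (metis (mono_tags, lifting) card.empty empty_Collect_eq less_irrefl)
      then show "i \<in> f ` {..<n}" by blast
    qed
  qed
  then have "f \<in> colorings n s c" using f by (simp add: colorings_def)
  then show ?thesis by blast
qed

lemma colorings_finite: "finite (colorings n s c)"
proof -
  have "colorings n s c \<subseteq> {..<n} \<rightarrow>\<^sub>E {..<s}" by (auto simp: colorings_def)
  then show ?thesis by (rule finite_subset) (simp add: finite_PiE)
qed

lemma col_fiber:
  assumes "f \<in> colorings n s c" "v < n"
  shows "card {w\<in>{..<n}. f w = f v} = c (f v)" "f v < s"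
proof -
  show "f v < s" using assms by (auto simp: colorings_def PiE_def Pi_def)
  then show "card {w\<in>{..<n}. f w = f v} = c (f v)" using assms by (auto simp: colorings_def)
qed

lemma col_perm:
  assumes "\<sigma> permutes {..<n}" "f \<in> colorings n s c"
  shows "f \<circ> \<sigma> \<in> colorings n s c"
proof -
  have f: "f \<in> {..<n} \<rightarrow>\<^sub>E {..<s}" "f ` {..<n} = {..<s}" "\<forall>i<s. card {v\<in>{..<n}. f v = i} = c i"
    using assms(2) by (auto simp: colorings_def)
  have im: "\<sigma> ` {..<n} = {..<n}" using assms(1) by (simp add: permutes_image)
  have out: "\<sigma> x = x" if "x \<notin> {..<n}" for x using assms(1) that by (simp add: permutes_not_in)
  have "f \<circ> \<sigma> \<in> {..<n} \<rightarrow>\<^sub>E {..<s}"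
  proof -
    have "(f \<circ> \<sigma>) x \<in> {..<s}" if "x < n" for x
      using f(1) im that by (auto simp: PiE_def Pi_def)
    moreover have "(f \<circ> \<sigma>) x = undefined" if "\<not> x < n" for x
      using f(1) out[of x] that by (auto simp: PiE_def extensional_def)
    ultimately show ?thesis by (auto simp: PiE_def Pi_def extensional_def)
  qed
  moreover have "(f \<circ> \<sigma>) ` {..<n} = {..<s}" using f(2) im by (metis image_comp)
  moreover have "card {v\<in>{..<n}. (f \<circ> \<sigma>) v = i} = c i" if "i < s" for i
  proof -
    have "bij_betw \<sigma> {v\<in>{..<n}. (f \<circ> \<sigma>) v = i} {v\<in>{..<n}. f v = i}"
    proof -
      have b: "bij_betw \<sigma> {..<n} {..<n}" using assms(1) by (rule permutes_imp_bij)
      have "\<sigma> ` {v\<in>{..<n}. (f \<circ> \<sigma>) v = i} = {v\<in>{..<n}. f v = i}"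
        using im by auto
      moreover have "inj_on \<sigma> {v\<in>{..<n}. (f \<circ> \<sigma>) v = i}"
        using b by (rule inj_on_subset[OF bij_betw_imp_inj_on]) auto
      ultimately show ?thesis by (simp add: bij_betw_def)
    qed
    then show ?thesis using f(3) that by (simp add: bij_betw_same_card)
  qed
  ultimately show ?thesis by (simp add: colorings_def)
qed

lemma sum_col_perm:
  assumes "\<sigma> permutes {..<n}"
  shows "(\<Sum>f\<in>colorings n s c. \<phi> (f \<circ> \<sigma>)) = (\<Sum>f\<in>colorings n s c. (\<phi> f :: real))"
proof -
  have "bij_betw (\<lambda>f. f \<circ> \<sigma>) (colorings n s c) (colorings n s c)"
  proof (rule bij_betw_imageI)
    show "inj_on (\<lambda>f. f \<circ> \<sigma>) (colorings n s c)"
    proof (rule inj_onI)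
      fix f g assume "f \<circ> \<sigma> = g \<circ> \<sigma>"
      then have "f \<circ> \<sigma> \<circ> inv \<sigma> = g \<circ> \<sigma> \<circ> inv \<sigma>" by simp
      then show "f = g" using permutes_inv_o(1)[OF assms] by (simp add: o_assoc[symmetric])
    qed
    show "(\<lambda>f. f \<circ> \<sigma>) ` colorings n s c = colorings n s c"
    proof
      show "(\<lambda>f. f \<circ> \<sigma>) ` colorings n s c \<subseteq> colorings n s c" using col_perm[OF assms] by auto
      show "colorings n s c \<subseteq> (\<lambda>f. f \<circ> \<sigma>) ` colorings n s c"
      proof
        fix g assume g: "g \<in> colorings n s c"
        have "g \<circ> inv \<sigma> \<in> colorings n s c" using col_perm[OF permutes_inv[OF assms] g] .
        moreover have "g = g \<circ> inv \<sigma> \<circ> \<sigma>" using permutes_inv_o(2)[OF assms] by (simp add: o_assoc[symmetric])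
        ultimately show "g \<in> (\<lambda>f. f \<circ> \<sigma>) ` colorings n s c" by blast
      qed
    qed
  qed
  then show ?thesis by (rule sum.reindex_bij_betw)
qed

lemma perm_to_list:
  assumes "distinct ys" "set ys \<subseteq> {..<n}"
  shows "\<exists>\<sigma>. \<sigma> permutes {..<n} \<and> (\<forall>i<length ys. \<sigma> i = ys ! i)"
proof -
  define k where "k = length ys"
  have kn: "k \<le> n"
  proof -
    have "card (set ys) \<le> card {..<n}" using assms(2) by (intro card_mono) auto
    then show ?thesis using distinct_card[OF assms(1)] by (simp add: k_def)
  qed
  have b1: "bij_betw ((!) ys) {..<k} (set ys)" using assms(1) by (intro bij_betw_nth) (auto simp: k_def)
  have "card ({..<n} - {..<k}) = card ({..<n} - set ys)"
  proof -
    have "card ({..<n} - {..<k}) = n - k" using kn by (simp add: card_Diff_subset)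
    moreover have "card ({..<n} - set ys) = n - k"
      using assms distinct_card[OF assms(1)] by (simp add: card_Diff_subset k_def)
    ultimately show ?thesis by simp
  qed
  then obtain g where g: "bij_betw g ({..<n} - {..<k}) ({..<n} - set ys)"
    using finite_same_card_bij[of "{..<n} - {..<k}" "{..<n} - set ys"] by auto
  define \<sigma> where "\<sigma> x = (if x < k then ys ! x else if x < n then g x else x)" for x
  have "bij_betw \<sigma> ({..<k} \<union> ({..<n} - {..<k})) (set ys \<union> ({..<n} - set ys))"
  proof (rule bij_betw_combine)
    have "bij_betw \<sigma> {..<k} (set ys) = bij_betw ((!) ys) {..<k} (set ys)"
      by (rule bij_betw_cong) (simp add: \<sigma>_def)
    then show "bij_betw \<sigma> {..<k} (set ys)" using b1 by simp
    have "bij_betw \<sigma> ({..<n} - {..<k}) ({..<n} - set ys) = bij_betw g ({..<n} - {..<k}) ({..<n} - set ys)"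
      by (rule bij_betw_cong) (simp add: \<sigma>_def)
    then show "bij_betw \<sigma> ({..<n} - {..<k}) ({..<n} - set ys)" using g by simp
  qed blast
  moreover have "{..<k} \<union> ({..<n} - {..<k}) = {..<n}" using kn by auto
  moreover have "set ys \<union> ({..<n} - set ys) = {..<n}" using assms(2) by auto
  ultimately have "bij_betw \<sigma> {..<n} {..<n}" by simp
  then have "\<sigma> permutes {..<n}" proof (rule bij_imp_permutes)
    show "\<sigma> x = x" if "x \<notin> {..<n}" for x using that kn by (simp add: \<sigma>_def)
  qed
  then show ?thesis by (auto simp: \<sigma>_def k_def)
qed

lemma sum_col_list:
  assumes "distinct ys" "set ys \<subseteq> {..<n}"
  shows "(\<Sum>f\<in>colorings n s c. (\<Phi> (map f ys) :: real)) = (\<Sum>f\<in>colorings n s c. \<Phi> (map f [0..<length ys]))"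
proof -
  obtain \<sigma> where \<sigma>: "\<sigma> permutes {..<n}" "\<forall>i<length ys. \<sigma> i = ys ! i"
    using perm_to_list[OF assms] by blast
  have "map f ys = map (f \<circ> \<sigma>) [0..<length ys]" for f :: "nat \<Rightarrow> nat"
    using \<sigma>(2) by (intro nth_equalityI) auto
  then have "(\<Sum>f\<in>colorings n s c. \<Phi> (map f ys)) = (\<Sum>f\<in>colorings n s c. \<Phi> (map (f \<circ> \<sigma>) [0..<length ys]))"
    by simp
  also have "\<dots> = (\<Sum>f\<in>colorings n s c. \<Phi> (map f [0..<length ys]))"
    using sum_col_perm[OF \<sigma>(1), of "\<lambda>f. \<Phi> (map f [0..<length ys])"] by simp
  finally show ?thesis .
qed


declare sum_of_bool_eq[simp del]

lemma sum_le_subset_bound: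
  fixes g :: "'a \<Rightarrow> real"
  assumes "finite A" "B \<subseteq> A" "\<And>x. x \<in> A \<Longrightarrow> g x \<le> K"
  shows "sum g A \<le> sum g B + K * real (card (A - B))"
proof -
  have "sum g A = sum g B + sum g (A - B)"
    using assms(1,2) by (metis add.commute sum.subset_diff)
  moreover have "sum g (A - B) \<le> K * real (card (A - B))"
    using sum_bounded_above[of "A - B" g K] assms(3) by (auto simp: mult.commute)
  ultimately show ?thesis by simp
qed

definition avgc :: "nat \<Rightarrow> nat \<Rightarrow> (nat \<Rightarrow> nat) \<Rightarrow> ((nat \<Rightarrow> nat) \<Rightarrow> real) \<Rightarrow> real" where
  "avgc n s c \<phi> = (\<Sum>f\<in>colorings n s c. \<phi> f) / real (card (colorings n s c))"

definition pp :: "nat \<Rightarrow> nat \<Rightarrow> (nat \<Rightarrow> nat) \<Rightarrow> real" where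
  "pp n s c = avgc n s c (\<lambda>f. of_bool (f 0 = f 1))"
definition p3 :: "nat \<Rightarrow> nat \<Rightarrow> (nat \<Rightarrow> nat) \<Rightarrow> real" where
  "p3 n s c = avgc n s c (\<lambda>f. of_bool (f 0 = f 1 \<and> f 0 = f 2))"
definition p4 :: "nat \<Rightarrow> nat \<Rightarrow> (nat \<Rightarrow> nat) \<Rightarrow> real" where
  "p4 n s c = avgc n s c (\<lambda>f. of_bool (f 0 = f 1 \<and> f 2 = f 3))"

definition a2 :: "nat \<Rightarrow> (nat \<Rightarrow> nat) \<Rightarrow> real" where
  "a2 s c = (\<Sum>i<s. real (c i) * (real (c i) - 1))"
definition a3 :: "nat \<Rightarrow> (nat \<Rightarrow> nat) \<Rightarrow> real" where
  "a3 s c = (\<Sum>i<s. real (c i) * (real (c i) - 1) * (real (c i) - 2))"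

lemma avgc_sum: "avgc n s c (\<lambda>f. \<Sum>x\<in>A. \<phi> x f) = (\<Sum>x\<in>A. avgc n s c (\<phi> x))"
  unfolding avgc_def by (subst sum.swap) (simp add: sum_divide_distrib)

lemma avgc_const: "is_composition n s c \<Longrightarrow> avgc n s c (\<lambda>f. K) = K"
  using colorings_nonempty[of n s c] colorings_finite[of n s c] by (simp add: avgc_def)

lemma avgc_cong: "(\<And>f. f \<in> colorings n s c \<Longrightarrow> \<phi> f = \<psi> f) \<Longrightarrow> avgc n s c \<phi> = avgc n s c \<psi>"
  unfolding avgc_def by (metis (mono_tags, lifting) sum.cong)

lemma avgc_mono: "(\<And>f. f \<in> colorings n s c \<Longrightarrow> \<phi> f \<le> \<psi> f) \<Longrightarrow> avgc n s c \<phi> \<le> avgc n s c \<psi>"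
  unfolding avgc_def by (intro divide_right_mono sum_mono) auto

lemma avgc_list:
  assumes "distinct ys" "set ys \<subseteq> {..<n}"
  shows "avgc n s c (\<lambda>f. \<Phi> (map f ys)) = avgc n s c (\<lambda>f. \<Phi> (map f [0..<length ys]))"
  unfolding avgc_def using sum_col_list[OF assms] by simp

lemma sym2:
  assumes "u < n" "v < n" "u \<noteq> v"
  shows "avgc n s c (\<lambda>f. of_bool (f u = f v)) = pp n s c"
  using avgc_list[of "[u,v]" n s c "\<lambda>xs. of_bool (xs!0 = xs!1)"] assms
  by (simp add: pp_def upt_rec eval_nat_numeral)

lemma sym3:
  assumes "u < n" "v < n" "w < n" "distinct [u,v,w]"
  shows "avgc n s c (\<lambda>f. of_bool (f u = f v \<and> f u = f w)) = p3 n s c"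
  using avgc_list[of "[u,v,w]" n s c "\<lambda>xs. of_bool (xs!0 = xs!1 \<and> xs!0 = xs!2)"] assms
  by (simp add: p3_def upt_rec eval_nat_numeral)

lemma sym4:
  assumes "u < n" "v < n" "w < n" "x < n" "distinct [u,v,w,x]"
  shows "avgc n s c (\<lambda>f. of_bool (f u = f v \<and> f w = f x)) = p4 n s c"
  using avgc_list[of "[u,v,w,x]" n s c "\<lambda>xs. of_bool (xs!0 = xs!1 \<and> xs!2 = xs!3)"] assms
  by (simp add: p4_def upt_rec eval_nat_numeral)

context
  fixes n s :: nat and c :: "nat \<Rightarrow> nat" and f :: "nat \<Rightarrow> nat"
  assumes fc: "f \<in> colorings n s c"
begin

lemma cnt1: "u < n \<Longrightarrow> (\<Sum>v<n. of_bool (f u = f v) :: real) = real (c (f u))"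
proof -
  assume u: "u < n"
  have "(\<Sum>v<n. of_bool (f u = f v) :: real) = real (card ({..<n} \<inter> {v. f u = f v}))"
    by (simp add: sum_of_bool_eq)
  also have "{..<n} \<inter> {v. f u = f v} = {w\<in>{..<n}. f w = f u}" by auto
  finally show ?thesis using col_fiber[OF fc u] by simp
qed

lemma cnt2: "u < n \<Longrightarrow> (\<Sum>v\<in>{..<n}-{u}. of_bool (f u = f v) :: real) = real (c (f u)) - 1"
  by (subst sum_diff1) (simp_all add: cnt1)

lemma cnt3:
  assumes "u < n" "v < n" "u \<noteq> v" "f u = f v"
  shows "(\<Sum>w\<in>{..<n}-{u,v}. of_bool (f u = f w) :: real) = real (c (f u)) - 2"
proof -
  have "{..<n}-{u,v} = ({..<n}-{u})-{v}" by auto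
  then have "(\<Sum>w\<in>{..<n}-{u,v}. of_bool (f u = f w) :: real) = (\<Sum>w\<in>{..<n}-{u}. of_bool (f u = f w)) - of_bool (f u = f v)"
    using assms by (simp add: sum_diff1)
  then show ?thesis using assms cnt2[of u] by simp
qed

lemma group_sum: "(\<Sum>u<n. g (f u) :: real) = (\<Sum>i<s. real (c i) * g i)"
proof -
  have im: "f ` {..<n} \<subseteq> {..<s}" using fc by (auto simp: colorings_def)
  have "(\<Sum>u<n. g (f u)) = (\<Sum>i<s. \<Sum>u\<in>{u\<in>{..<n}. f u = i}. g (f u))"
    using sum.group[of "{..<n}" "{..<s}" f "\<lambda>u. g (f u)"] im by simp
  also have "\<dots> = (\<Sum>i<s. \<Sum>u\<in>{u\<in>{..<n}. f u = i}. g i)"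
    by (intro sum.cong) auto
  also have "\<dots> = (\<Sum>i<s. real (c i) * g i)"
    using fc by (intro sum.cong) (auto simp: colorings_def)
  finally show ?thesis .
qed

lemma count_a2: "(\<Sum>u<n. \<Sum>v\<in>{..<n}-{u}. of_bool (f u = f v) :: real) = a2 s c"
proof -
  have "(\<Sum>u<n. \<Sum>v\<in>{..<n}-{u}. of_bool (f u = f v) :: real) = (\<Sum>u<n. real (c (f u)) - 1)"
    by (intro sum.cong) (auto simp: cnt2)
  also have "\<dots> = a2 s c" using group_sum[of "\<lambda>i. real (c i) - 1"] by (simp add: a2_def)
  finally show ?thesis .
qed

lemma count_a3:
  "(\<Sum>u<n. \<Sum>v\<in>{..<n}-{u}. \<Sum>w\<in>{..<n}-{u,v}. of_bool (f u = f v \<and> f u = f w) :: real) = a3 s c"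
proof -
  have "(\<Sum>w\<in>{..<n}-{u,v}. of_bool (f u = f v \<and> f u = f w) :: real)
        = of_bool (f u = f v) * (real (c (f u)) - 2)" if "u < n" "v \<in> {..<n}-{u}" for u v
  proof (cases "f u = f v")
    case True
    then show ?thesis using cnt3[of u v] that by simp
  next
    case False
    then show ?thesis by simp
  qed
  then have "(\<Sum>u<n. \<Sum>v\<in>{..<n}-{u}. \<Sum>w\<in>{..<n}-{u,v}. of_bool (f u = f v \<and> f u = f w) :: real)
     = (\<Sum>u<n. \<Sum>v\<in>{..<n}-{u}. of_bool (f u = f v) * (real (c (f u)) - 2))"
    by (intro sum.cong) auto
  also have "\<dots> = (\<Sum>u<n. (real (c (f u)) - 1) * (real (c (f u)) - 2))"
    by (intro sum.cong) (auto simp: sum_distrib_right[symmetric] cnt2)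
  also have "\<dots> = a3 s c" using group_sum[of "\<lambda>i. (real i - 1) * (real i - 2)"]
    using group_sum[of "\<lambda>i. (real (c i) - 1) * (real (c i) - 2)"] by (simp add: a3_def mult.assoc)
  finally show ?thesis .
qed

end


declare sum_of_bool_eq[simp del]

context
  fixes n s :: nat and c :: "nat \<Rightarrow> nat" and f :: "nat \<Rightarrow> nat"
  assumes fc: "f \<in> colorings n s c"
begin

lemma count_a4:
  "a2 s c * (a2 s c - 4 * real n) \<le> (\<Sum>u<n. \<Sum>v\<in>{..<n}-{u}. \<Sum>w\<in>{..<n}-{u,v}. \<Sum>x\<in>{..<n}-{u,v,w}.
       of_bool (f u = f v \<and> f w = f x) :: real)"
  "(\<Sum>u<n. \<Sum>v\<in>{..<n}-{u}. \<Sum>w\<in>{..<n}-{u,v}. \<Sum>x\<in>{..<n}-{u,v,w}.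
       of_bool (f u = f v \<and> f w = f x) :: real) \<le> a2 s c * a2 s c"
proof -
  define F where "F w = (\<Sum>x\<in>{..<n}-{w}. of_bool (f w = f x) :: real)" for w
  define T where "T u v = (\<Sum>w\<in>{..<n}-{u,v}. \<Sum>x\<in>{..<n}-{u,v,w}. of_bool (f w = f x) :: real)" for u v
  have sumF: "(\<Sum>w<n. F w) = a2 s c" using count_a2[OF fc] by (simp add: F_def)
  have Fnn: "F w \<ge> 0" for w by (simp add: F_def sum_nonneg)
  have Fle: "F w \<le> real n" for w
  proof -
    have "F w \<le> (\<Sum>x\<in>{..<n}-{w}. 1)" unfolding F_def by (intro sum_mono) auto
    also have "\<dots> \<le> real n" using card_Diff1_le[of "{..<n}" w] by simp
    finally show ?thesis .
  qed
  have Tup: "T u v \<le> a2 s c" for u v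
  proof -
    have "T u v \<le> (\<Sum>w\<in>{..<n}-{u,v}. F w)" unfolding T_def F_def
    proof (rule sum_mono)
      fix w assume "w \<in> {..<n}-{u,v}"
      show "(\<Sum>x\<in>{..<n}-{u,v,w}. of_bool (f w = f x) :: real) \<le> (\<Sum>x\<in>{..<n}-{w}. of_bool (f w = f x))"
        by (rule sum_mono2) auto
    qed
    also have "\<dots> \<le> (\<Sum>w<n. F w)" by (intro sum_mono2) (auto simp: Fnn)
    finally show ?thesis using sumF by simp
  qed
  have Tlow: "T u v \<ge> a2 s c - 4 * real n" for u v
  proof -
    have c2: "card (A - (A - X)) \<le> 2" if "card X \<le> 2" "finite X" for A X :: "nat set"
    proof -
      have "A - (A - X) \<subseteq> X" by auto
      then show ?thesis by (metis card_mono that le_trans)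
    qed
    have cx: "card {a,b::nat} \<le> 2" for a b by (simp add: card_insert_le_m1)
    have inner: "(\<Sum>x\<in>{..<n}-{u,v,w}. of_bool (f w = f x) :: real) \<ge> F w - 2" for w
    proof -
      have "F w \<le> (\<Sum>x\<in>{..<n}-{u,v,w}. of_bool (f w = f x) :: real) + 1 * real (card (({..<n}-{w}) - ({..<n}-{u,v,w})))"
        unfolding F_def by (rule sum_le_subset_bound) auto
      moreover have "card (({..<n}-{w}) - ({..<n}-{u,v,w})) \<le> 2"
      proof -
        have "({..<n}-{w}) - ({..<n}-{u,v,w}) \<subseteq> {u,v}" by auto
        then show ?thesis by (meson card_mono cx finite.emptyI finite.insertI le_trans)
      qed
      ultimately show ?thesis by linarith
    qed
    have "T u v \<ge> (\<Sum>w\<in>{..<n}-{u,v}. F w - 2)" unfolding T_def by (intro sum_mono inner)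
    moreover have "(\<Sum>w\<in>{..<n}-{u,v}. F w - 2) = (\<Sum>w\<in>{..<n}-{u,v}. F w) - 2 * real (card ({..<n}-{u,v}))"
      by (simp add: sum_subtractf)
    moreover have "card ({..<n}-{u,v}) \<le> n" by (metis card_lessThan card_mono Diff_subset finite_lessThan)
    moreover have "(\<Sum>w<n. F w) \<le> (\<Sum>w\<in>{..<n}-{u,v}. F w) + real n * real (card ({..<n} - ({..<n}-{u,v})))"
      by (rule sum_le_subset_bound) (auto simp: Fle)
    moreover have "card ({..<n} - ({..<n}-{u,v})) \<le> 2"
      using c2[OF cx] by simp
    moreover have "real n * real (card ({..<n} - ({..<n}-{u,v}))) \<le> real n * 2"
      using c2[OF cx] by (intro mult_left_mono) auto
    ultimately show ?thesis using sumF by linarith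
  qed
  have eq: "(\<Sum>u<n. \<Sum>v\<in>{..<n}-{u}. \<Sum>w\<in>{..<n}-{u,v}. \<Sum>x\<in>{..<n}-{u,v,w}.
       of_bool (f u = f v \<and> f w = f x) :: real) = (\<Sum>u<n. \<Sum>v\<in>{..<n}-{u}. of_bool (f u = f v) * T u v)"
    unfolding T_def by (simp only: of_bool_conj sum_distrib_left)
  have "(\<Sum>u<n. \<Sum>v\<in>{..<n}-{u}. of_bool (f u = f v) * T u v) \<le> (\<Sum>u<n. \<Sum>v\<in>{..<n}-{u}. of_bool (f u = f v) * a2 s c)"
    by (intro sum_mono mult_left_mono Tup) auto
  also have "\<dots> = a2 s c * a2 s c" using count_a2[OF fc] by (simp add: sum_distrib_right[symmetric])
  finally show "(\<Sum>u<n. \<Sum>v\<in>{..<n}-{u}. \<Sum>w\<in>{..<n}-{u,v}. \<Sum>x\<in>{..<n}-{u,v,w}.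
       of_bool (f u = f v \<and> f w = f x) :: real) \<le> a2 s c * a2 s c" using eq by simp
  have "(\<Sum>u<n. \<Sum>v\<in>{..<n}-{u}. of_bool (f u = f v) * T u v) \<ge> (\<Sum>u<n. \<Sum>v\<in>{..<n}-{u}. of_bool (f u = f v) * (a2 s c - 4 * real n))"
    by (intro sum_mono mult_left_mono Tlow) auto
  moreover have "(\<Sum>u<n. \<Sum>v\<in>{..<n}-{u}. of_bool (f u = f v) * (a2 s c - 4 * real n)) = a2 s c * (a2 s c - 4 * real n)"
    using count_a2[OF fc] by (simp add: sum_distrib_right[symmetric])
  ultimately show "a2 s c * (a2 s c - 4 * real n) \<le> (\<Sum>u<n. \<Sum>v\<in>{..<n}-{u}. \<Sum>w\<in>{..<n}-{u,v}. \<Sum>x\<in>{..<n}-{u,v,w}.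
       of_bool (f u = f v \<and> f w = f x) :: real)" using eq by simp
qed


end

lemma card_rm1: "u < n \<Longrightarrow> real (card ({..<n} - {u})) = real n - 1"
  by (simp add: of_nat_diff)

lemma card_rm2: "u < n \<Longrightarrow> v < n \<Longrightarrow> u \<noteq> v \<Longrightarrow> real (card ({..<n} - {u,v})) = real n - 2"
proof -
  assume a: "u < n" "v < n" "u \<noteq> v"
  then have "card ({..<n} - {u,v}) = n - 2" by (subst card_Diff_subset) auto
  then show ?thesis using a by (simp add: of_nat_diff)
qed

lemma card_rm3: "u < n \<Longrightarrow> v < n \<Longrightarrow> w < n \<Longrightarrow> distinct [u,v,w] \<Longrightarrow> real (card ({..<n} - {u,v,w})) = real n - 3"
proof -
  assume a: "u < n" "v < n" "w < n" "distinct [u,v,w]"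
  then have "card ({..<n} - {u,v,w}) = n - 3" by (subst card_Diff_subset) auto
  moreover have "3 \<le> n"
  proof -
    have "card {u,v,w} \<le> card {..<n}" using a by (intro card_mono) auto
    then show ?thesis using a by simp
  qed
  ultimately show ?thesis by (simp add: of_nat_diff)
qed

context
  fixes n s :: nat and c :: "nat \<Rightarrow> nat"
  assumes comp: "is_composition n s c"
begin

lemma pp_val: "pp n s c * (real n * (real n - 1)) = a2 s c"
proof -
  have "a2 s c = avgc n s c (\<lambda>f. \<Sum>u<n. \<Sum>v\<in>{..<n}-{u}. of_bool (f u = f v))"
  proof -
    have "avgc n s c (\<lambda>f. \<Sum>u<n. \<Sum>v\<in>{..<n}-{u}. of_bool (f u = f v)) = avgc n s c (\<lambda>f. a2 s c)"
      by (rule avgc_cong) (rule count_a2)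
    then show ?thesis using avgc_const[OF comp, of "a2 s c"] by simp
  qed
  also have "\<dots> = (\<Sum>u<n. \<Sum>v\<in>{..<n}-{u}. avgc n s c (\<lambda>f. of_bool (f u = f v)))"
    by (simp add: avgc_sum)
  also have "\<dots> = (\<Sum>u<n. \<Sum>v\<in>{..<n}-{u}. pp n s c)"
    by (intro sum.cong refl) (auto simp: sym2)
  also have "\<dots> = (\<Sum>u<n. (real n - 1) * pp n s c)"
    by (intro sum.cong refl) (simp add: card_rm1)
  finally show ?thesis by (simp add: algebra_simps)
qed

lemma p3_val: "p3 n s c * (real n * (real n - 1) * (real n - 2)) = a3 s c"
proof -
  have "a3 s c = avgc n s c (\<lambda>f. \<Sum>u<n. \<Sum>v\<in>{..<n}-{u}. \<Sum>w\<in>{..<n}-{u,v}. of_bool (f u = f v \<and> f u = f w))"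
  proof -
    have "avgc n s c (\<lambda>f. \<Sum>u<n. \<Sum>v\<in>{..<n}-{u}. \<Sum>w\<in>{..<n}-{u,v}. of_bool (f u = f v \<and> f u = f w)) = avgc n s c (\<lambda>f. a3 s c)"
      by (rule avgc_cong) (rule count_a3)
    then show ?thesis using avgc_const[OF comp, of "a3 s c"] by simp
  qed
  also have "\<dots> = (\<Sum>u<n. \<Sum>v\<in>{..<n}-{u}. \<Sum>w\<in>{..<n}-{u,v}. avgc n s c (\<lambda>f. of_bool (f u = f v \<and> f u = f w)))"
    by (simp add: avgc_sum)
  also have "\<dots> = (\<Sum>u<n. \<Sum>v\<in>{..<n}-{u}. \<Sum>w\<in>{..<n}-{u,v}. p3 n s c)"
    by (intro sum.cong refl) (auto simp: sym3)
  also have "\<dots> = (\<Sum>u<n. \<Sum>v\<in>{..<n}-{u}. (real n - 2) * p3 n s c)"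
    by (intro sum.cong refl) (auto simp: card_rm2)
  also have "\<dots> = (\<Sum>u<n. (real n - 1) * ((real n - 2) * p3 n s c))"
    by (intro sum.cong refl) (simp add: card_rm1)
  finally show ?thesis by (simp add: algebra_simps)
qed

lemma p4_eq: "p4 n s c * (real n * (real n - 1) * (real n - 2) * (real n - 3)) =
   avgc n s c (\<lambda>f. \<Sum>u<n. \<Sum>v\<in>{..<n}-{u}. \<Sum>w\<in>{..<n}-{u,v}. \<Sum>x\<in>{..<n}-{u,v,w}. of_bool (f u = f v \<and> f w = f x))"
proof -
  have "avgc n s c (\<lambda>f. \<Sum>u<n. \<Sum>v\<in>{..<n}-{u}. \<Sum>w\<in>{..<n}-{u,v}. \<Sum>x\<in>{..<n}-{u,v,w}. of_bool (f u = f v \<and> f w = f x))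
     = (\<Sum>u<n. \<Sum>v\<in>{..<n}-{u}. \<Sum>w\<in>{..<n}-{u,v}. \<Sum>x\<in>{..<n}-{u,v,w}. avgc n s c (\<lambda>f. of_bool (f u = f v \<and> f w = f x)))"
    by (simp add: avgc_sum)
  also have "\<dots> = (\<Sum>u<n. \<Sum>v\<in>{..<n}-{u}. \<Sum>w\<in>{..<n}-{u,v}. \<Sum>x\<in>{..<n}-{u,v,w}. p4 n s c)"
    by (intro sum.cong refl) (auto simp: sym4)
  also have "\<dots> = (\<Sum>u<n. \<Sum>v\<in>{..<n}-{u}. \<Sum>w\<in>{..<n}-{u,v}. (real n - 3) * p4 n s c)"
    by (intro sum.cong refl) (auto simp: card_rm3)
  also have "\<dots> = (\<Sum>u<n. \<Sum>v\<in>{..<n}-{u}. (real n - 2) * ((real n - 3) * p4 n s c))"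
    by (intro sum.cong refl) (auto simp: card_rm2)
  also have "\<dots> = (\<Sum>u<n. (real n - 1) * ((real n - 2) * ((real n - 3) * p4 n s c)))"
    by (intro sum.cong refl) (simp add: card_rm1)
  finally show ?thesis by (simp add: algebra_simps)
qed

lemma p4_bounds:
  "a2 s c * (a2 s c - 4 * real n) \<le> p4 n s c * (real n * (real n - 1) * (real n - 2) * (real n - 3))"
  "p4 n s c * (real n * (real n - 1) * (real n - 2) * (real n - 3)) \<le> a2 s c * a2 s c"
proof -
  show "a2 s c * (a2 s c - 4 * real n) \<le> p4 n s c * (real n * (real n - 1) * (real n - 2) * (real n - 3))"
    unfolding p4_eq using avgc_mono[of n s c "\<lambda>f. a2 s c * (a2 s c - 4 * real n)", OF count_a4(1)] avgc_const[OF comp]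
    by simp
  show "p4 n s c * (real n * (real n - 1) * (real n - 2) * (real n - 3)) \<le> a2 s c * a2 s c"
    unfolding p4_eq using avgc_mono[of n s c _ "\<lambda>f. a2 s c * a2 s c", OF count_a4(2)] avgc_const[OF comp]
    by simp
qed

end


lemma var_ident:
  fixes q :: "nat \<Rightarrow> real"
  assumes sq: "(\<Sum>i<s. q i) = 1" and qd: "\<forall>i<s. q i \<ge> \<delta>" and d0: "\<delta> \<ge> 0"
  shows "(\<Sum>i<s. q i ^ 3) - (\<Sum>i<s. q i ^ 2)^2 \<ge> \<delta> * (\<Sum>i<s. (q i - 1 / real s)^2)"
proof -
  define S where "S = (\<Sum>i<s. q i ^ 2)"
  have s0: "s > 0" using sq by (cases s) auto
  have e1: "(\<Sum>i<s. q i * (q i - S)^2) = (\<Sum>i<s. q i ^ 3) - S^2"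
  proof -
    have "(\<Sum>i<s. q i * (q i - S)^2) = (\<Sum>i<s. q i ^ 3 - 2 * S * q i ^ 2 + S^2 * q i)"
      by (intro sum.cong refl) (simp add: power2_eq_square power3_eq_cube algebra_simps)
    also have "\<dots> = (\<Sum>i<s. q i ^ 3) - 2 * S * S + S^2 * 1"
      by (simp add: sum.distrib sum_subtractf sum_distrib_left[symmetric] S_def sq)
    finally show ?thesis by (simp add: power2_eq_square)
  qed
  have e2: "(\<Sum>i<s. q i * (q i - S)^2) \<ge> (\<Sum>i<s. \<delta> * (q i - S)^2)"
    using qd by (intro sum_mono mult_right_mono) auto
  have e3: "(\<Sum>i<s. (q i - S)^2) \<ge> (\<Sum>i<s. (q i - 1 / real s)^2)"
  proof -
    have z: "(\<Sum>i<s. (q i - 1 / real s)) = 0" using sq s0 by (simp add: sum_subtractf)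
    have "(\<Sum>i<s. (q i - S)^2) = (\<Sum>i<s. (q i - 1 / real s)^2 + 2 * (1 / real s - S) * (q i - 1 / real s) + (1 / real s - S)^2)"
      by (intro sum.cong refl) (simp add: power2_eq_square algebra_simps)
    also have "\<dots> = (\<Sum>i<s. (q i - 1 / real s)^2) + 2 * (1 / real s - S) * (\<Sum>i<s. (q i - 1 / real s)) + real s * (1 / real s - S)^2"
      by (simp add: sum.distrib sum_distrib_left)
    finally show ?thesis using z by simp
  qed
  have "\<delta> * (\<Sum>i<s. (q i - 1 / real s)^2) \<le> \<delta> * (\<Sum>i<s. (q i - S)^2)"
    using e3 d0 by (rule mult_left_mono)
  also have "\<dots> = (\<Sum>i<s. \<delta> * (q i - S)^2)" by (simp add: sum_distrib_left)
  finally have "\<delta> * (\<Sum>i<s. (q i - 1 / real s)^2) \<le> (\<Sum>i<s. q i ^ 3) - S^2" using e1 e2 by linarith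
  then show ?thesis by (simp add: S_def)
qed

context
  fixes n s :: nat and c :: "nat \<Rightarrow> nat"
  assumes comp: "is_composition n s c"
begin

lemma sumc: "(\<Sum>i<s. real (c i)) = real n"
  using comp unfolding is_composition_def by (metis of_nat_sum)

lemma a2_alt: "a2 s c = (\<Sum>i<s. real (c i) ^ 2) - real n"
  unfolding a2_def using sumc by (simp add: power2_eq_square algebra_simps sum_subtractf)

lemma a2_nonneg: "a2 s c \<ge> 0"
proof -
  have "real (c i) * (real (c i) - 1) \<ge> 0" for i by (cases "c i") auto
  then show ?thesis unfolding a2_def by (intro sum_nonneg) auto
qed

lemma a2_le: "a2 s c \<le> real n * (real n - 1)"
proof -
  have ci: "c i \<le> n" if "i < s" for i
    using comp that unfolding is_composition_def
    by (metis finite_lessThan lessThan_iff member_le_sum zero_le)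
  have "a2 s c \<le> (\<Sum>i<s. real (c i) * (real n - 1))"
    unfolding a2_def using ci by (intro sum_mono mult_left_mono) auto
  also have "\<dots> = real n * (real n - 1)" using sumc by (simp add: sum_distrib_right[symmetric])
  finally show ?thesis .
qed

lemma a3_nonneg: "a3 s c \<ge> 0"
proof -
  have "real (c i) * (real (c i) - 1) * (real (c i) - 2) \<ge> 0" for i
  proof (cases "c i \<le> 2")
    case True
    then have "c i = 0 \<or> c i = 1 \<or> c i = 2" by auto
    then show ?thesis by auto
  next
    case False
    then show ?thesis by auto
  qed
  then show ?thesis unfolding a3_def by (intro sum_nonneg) auto
qed

lemma a3_ge: "a3 s c \<ge> (\<Sum>i<s. real (c i) ^ 3) - 3 * (\<Sum>i<s. real (c i) ^ 2)"
proof -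
  have "real (c i) * (real (c i) - 1) * (real (c i) - 2) \<ge> real (c i) ^ 3 - 3 * real (c i) ^ 2" for i
    by (simp add: power2_eq_square power3_eq_cube algebra_simps)
  then have "a3 s c \<ge> (\<Sum>i<s. real (c i) ^ 3 - 3 * real (c i) ^ 2)"
    unfolding a3_def by (intro sum_mono) auto
  then show ?thesis by (simp add: sum_subtractf sum_distrib_left)
qed

lemma sumc2_le: "(\<Sum>i<s. real (c i) ^ 2) \<le> real n ^ 2"
proof -
  have ci: "c i \<le> n" if "i < s" for i
    using comp that unfolding is_composition_def
    by (metis finite_lessThan lessThan_iff member_le_sum zero_le)
  have "(\<Sum>i<s. real (c i) ^ 2) \<le> (\<Sum>i<s. real (c i) * real n)"
    using ci by (intro sum_mono) (auto simp: power2_eq_square intro!: mult_left_mono)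
  also have "\<dots> = real n ^ 2" using sumc by (simp add: sum_distrib_right[symmetric] power2_eq_square)
  finally show ?thesis .
qed

lemma pp_expr: "2 \<le> n \<Longrightarrow> pp n s c = a2 s c / (real n * (real n - 1))"
proof -
  assume "2 \<le> n"
  then have d: "real n * (real n - 1) \<noteq> 0" by simp
  from pp_val[OF comp] show ?thesis by (metis d nonzero_eq_divide_eq)
qed

lemma p3_expr: "3 \<le> n \<Longrightarrow> p3 n s c = a3 s c / (real n * (real n - 1) * (real n - 2))"
proof -
  assume "3 \<le> n"
  then have d: "real n * (real n - 1) * (real n - 2) \<noteq> 0" by simp
  from p3_val[OF comp] show ?thesis by (metis d nonzero_eq_divide_eq)
qed

lemma pp_nonneg: "2 \<le> n \<Longrightarrow> pp n s c \<ge> 0"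
  using pp_expr a2_nonneg by simp

lemma pp_ge:
  assumes n2: "2 \<le> n" and cd: "\<forall>i<s. real (c i) / real n \<ge> \<delta>"
  shows "pp n s c \<ge> \<delta> - 1 / real n"
proof -
  have n0: "real n > 0" using n2 by simp
  have "a2 s c / (real n * (real n - 1)) \<ge> a2 s c / (real n * real n)"
    using a2_nonneg n2 by (intro divide_left_mono) auto
  moreover have "(\<Sum>i<s. real (c i) ^ 2) \<ge> (\<Sum>i<s. \<delta> * real n * real (c i))"
  proof (intro sum_mono)
    fix i assume "i \<in> {..<s}"
    then have "real (c i) \<ge> \<delta> * real n" using cd n0 by (auto simp: field_simps)
    then show "\<delta> * real n * real (c i) \<le> real (c i) ^ 2" by (simp add: power2_eq_square mult_right_mono)
  qed
  moreover have "(\<Sum>i<s. \<delta> * real n * real (c i)) = \<delta> * real n * real n"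
    using sumc by (simp add: sum_distrib_left[symmetric])
  ultimately have "pp n s c \<ge> (\<delta> * real n * real n - real n) / (real n * real n)"
    using pp_expr[OF n2] a2_alt n0 by (smt (verit) divide_right_mono mult_pos_pos)
  also have "(\<delta> * real n * real n - real n) / (real n * real n) = \<delta> - 1 / real n"
    using n0 by (simp add: field_simps)
  finally show ?thesis .
qed

lemma pp_le_S:
  assumes n2: "2 \<le> n"
  shows "pp n s c \<le> (\<Sum>i<s. real (c i) ^ 2) / real n ^ 2"
proof -
  define X where "X = (\<Sum>i<s. real (c i) ^ 2)"
  have X: "X \<le> real n ^ 2" using sumc2_le by (simp add: X_def)
  have n1: "real n - 1 > 0" using n2 by simp
  have "pp n s c = (X - real n) / (real n * (real n - 1))" using pp_expr[OF n2] a2_alt by (simp add: X_def)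
  also have "\<dots> \<le> X / real n ^ 2"
  proof -
    have "(X - real n) * real n ^ 2 \<le> X * (real n * (real n - 1))"
    proof -
      have "(X - real n) * real n ^ 2 - X * (real n * (real n - 1)) = real n * (X - real n ^ 2)"
        by (simp add: power2_eq_square algebra_simps)
      moreover have "real n * (X - real n ^ 2) \<le> 0" using X by (simp add: mult_nonneg_nonpos)
      ultimately show ?thesis by linarith
    qed
    then show ?thesis using n1 n2 by (simp add: divide_simps)
  qed
  finally show ?thesis by (simp add: X_def)
qed

lemma p3_ge:
  assumes n3: "3 \<le> n"
  shows "p3 n s c \<ge> (\<Sum>i<s. real (c i) ^ 3) / real n ^ 3 - 3 / real n"
proof -
  have n0: "real n > 0" using n3 by simp
  have d: "0 < real n * (real n - 1) * (real n - 2)" using n3 by simp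
  have "real n * (real n - 1) * (real n - 2) \<le> real n ^ 3"
    using n3 by (simp add: power3_eq_cube algebra_simps)
  then have "a3 s c / (real n * (real n - 1) * (real n - 2)) \<ge> a3 s c / real n ^ 3"
    using a3_nonneg d n0 by (intro divide_left_mono) auto
  moreover have "a3 s c / real n ^ 3 \<ge> ((\<Sum>i<s. real (c i) ^ 3) - 3 * real n ^ 2) / real n ^ 3"
    using a3_ge sumc2_le n0 by (intro divide_right_mono) auto
  moreover have "((\<Sum>i<s. real (c i) ^ 3) - 3 * real n ^ 2) / real n ^ 3 = (\<Sum>i<s. real (c i) ^ 3) / real n ^ 3 - 3 / real n"
    using n0 by (simp add: field_simps power2_eq_square power3_eq_cube)
  ultimately show ?thesis using p3_expr[OF n3] by linarith
qed

lemma gap: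
  assumes n3: "3 \<le> n" and cd: "\<forall>i<s. real (c i) / real n \<ge> \<delta>" and d0: "\<delta> \<ge> 0"
  shows "p3 n s c - pp n s c ^ 2 \<ge> \<delta> * (\<Sum>i<s. (real (c i) / real n - 1 / real s)^2) - 3 / real n"
proof -
  have n0: "real n > 0" using n3 by simp
  define q where "q i = real (c i) / real n" for i
  have sq: "(\<Sum>i<s. q i) = 1" using sumc n0 by (simp add: q_def sum_divide_distrib[symmetric])
  have S: "(\<Sum>i<s. q i ^ 2) = (\<Sum>i<s. real (c i) ^ 2) / real n ^ 2"
    by (simp add: q_def power_divide sum_divide_distrib)
  have T: "(\<Sum>i<s. q i ^ 3) = (\<Sum>i<s. real (c i) ^ 3) / real n ^ 3"
    by (simp add: q_def power_divide sum_divide_distrib)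
  have v: "(\<Sum>i<s. q i ^ 3) - (\<Sum>i<s. q i ^ 2)^2 \<ge> \<delta> * (\<Sum>i<s. (q i - 1 / real s)^2)"
    using var_ident[OF sq _ d0] cd by (simp add: q_def)
  have pS: "pp n s c ^ 2 \<le> (\<Sum>i<s. q i ^ 2)^2"
    using pp_le_S pp_nonneg n3 S by (intro power_mono) auto
  show ?thesis using v pS p3_ge[OF n3] T by (simp add: q_def)
qed

lemma p4_close:
  assumes n6: "6 \<le> n"
  shows "\<bar>p4 n s c - pp n s c ^ 2\<bar> \<le> 16 / real n"
proof -
  define x where "x = a2 s c"
  define N where "N = real n * (real n - 1)"
  define D where "D = (real n - 2) * (real n - 3)"
  have n0: "real n > 0" using n6 by simp
  have D0: "D > 0" using n6 by (simp add: D_def)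
  have N0: "N > 0" using n6 by (simp add: N_def)
  have x0: "x \<ge> 0" using a2_nonneg by (simp add: x_def)
  have xN: "x \<le> N" using a2_le by (simp add: x_def N_def)
  have ND: "D \<le> N" using n6 by (simp add: D_def N_def algebra_simps)
  have pN: "pp n s c = x / N" using pp_expr n6 by (simp add: x_def N_def)
  have b1: "x * (x - 4 * real n) \<le> p4 n s c * (N * D)"
    using p4_bounds(1)[OF comp] by (simp add: x_def N_def D_def mult.assoc)
  have b2: "p4 n s c * (N * D) \<le> x * x"
    using p4_bounds(2)[OF comp] by (simp add: x_def N_def D_def mult.assoc)
  have ND0: "N * D > 0" using N0 D0 by simp
  have up: "p4 n s c - (x / N)^2 \<le> 4 * real n / D"
  proof -
    have "p4 n s c \<le> x * x / (N * D)" using b2 ND0 by (simp add: field_simps)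
    moreover have "x * x / (N * D) - (x / N)^2 = x * x * (N - D) / (N * N * D)"
      using N0 D0 by (simp add: field_simps power2_eq_square)
    moreover have "x * x * (N - D) / (N * N * D) \<le> N * N * (N - D) / (N * N * D)"
      using x0 xN ND N0 D0 by (intro divide_right_mono mult_right_mono mult_mono) auto
    moreover have "N * N * (N - D) / (N * N * D) = (N - D) / D" using N0 D0 by (simp add: field_simps)
    moreover have "N - D \<le> 4 * real n" by (simp add: N_def D_def algebra_simps)
    moreover have "(N - D) / D \<le> 4 * real n / D" using D0 \<open>N - D \<le> 4 * real n\<close> by (simp add: divide_right_mono)
    ultimately show ?thesis by linarith
  qed
  have lo: "p4 n s c - (x / N)^2 \<ge> - (4 * real n / D)"
  proof -
    have "p4 n s c \<ge> x * (x - 4 * real n) / (N * D)" using b1 ND0 by (simp add: field_simps)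
    moreover have "x * (x - 4 * real n) / (N * D) - (x / N)^2 = x * x * (N - D) / (N * N * D) - 4 * real n * (x / N) / D"
      using N0 D0 by (simp add: field_simps power2_eq_square)
    moreover have "x * x * (N - D) / (N * N * D) \<ge> 0" using x0 ND N0 D0 by simp
    moreover have "4 * real n * (x / N) / D \<le> 4 * real n * 1 / D"
      using x0 xN N0 D0 by (intro divide_right_mono mult_left_mono) auto
    ultimately show ?thesis by linarith
  qed
  have "4 * real n / D \<le> 16 / real n"
  proof -
    have "4 * real n * real n \<le> 16 * D"
    proof -
      have "16 * D - 4 * real n * real n = 4 * (3 * real n * real n - 20 * real n + 24)"
        by (simp add: D_def algebra_simps)
      moreover have "3 * real n * real n - 20 * real n + 24 \<ge> 0"
      proof -
        have "3 * real n * real n - 20 * real n + 24 = (real n - 6) * (3 * real n - 2) + 12"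
          by (simp add: algebra_simps)
        moreover have "(real n - 6) * (3 * real n - 2) \<ge> 0" using n6 by simp
        ultimately show ?thesis by linarith
      qed
      ultimately have "16 * D - 4 * real n * real n \<ge> 0" by simp
      then show ?thesis by simp
    qed
    then show ?thesis using D0 n0 by (simp add: field_simps)
  qed
  then show ?thesis using up lo pN by (simp add: abs_le_iff)
qed

end


declare sum_of_bool_eq[simp del]

definition edges :: "nat \<Rightarrow> nat set set" where
  "edges n = {e. \<exists>u v. u < n \<and> v < n \<and> u \<noteq> v \<and> e = {u, v}}"

definition Xe :: "nat set \<Rightarrow> (nat \<Rightarrow> nat) \<Rightarrow> real" where
  "Xe e f = of_bool (\<exists>u v. e = {u, v} \<and> f u = f v)"

lemma simple_graphs_edges: "E \<in> simple_graphs n \<longleftrightarrow> E \<subseteq> edges n"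
  by (simp add: simple_graphs_def edges_def)

lemma finite_edges: "finite (edges n)"
proof -
  have "edges n \<subseteq> (\<lambda>(u,v). {u,v}) ` ({..<n} \<times> {..<n})" by (auto simp: edges_def)
  then show ?thesis by (rule finite_subset) auto
qed

lemma finite_simple_graphs: "finite (simple_graphs n)"
proof -
  have "simple_graphs n = Pow (edges n)" by (auto simp: simple_graphs_edges)
  then show ?thesis using finite_edges by simp
qed

lemma Xe_pair: "u \<noteq> v \<Longrightarrow> Xe {u,v} f = of_bool (f u = f v)"
  unfolding Xe_def by (auto simp: doubleton_eq_iff)

lemma mono_edges_sum: "finite E \<Longrightarrow> mono_edges E f = (\<Sum>e\<in>E. Xe e f)"
  unfolding mono_edges_def Xe_def by (simp add: sum_of_bool_eq Int_def)

lemma pp_le1: "is_composition n s c \<Longrightarrow> pp n s c \<le> 1"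
  unfolding pp_def using avgc_mono[of n s c "\<lambda>f. of_bool (f 0 = f 1)" "\<lambda>f. 1"] avgc_const by simp

lemma p3_le_pp: "p3 n s c \<le> pp n s c"
  unfolding pp_def p3_def by (rule avgc_mono) simp

lemma p3_nonneg: "p3 n s c \<ge> 0"
proof -
  have "p3 n s c \<ge> avgc n s c (\<lambda>f. 0)" unfolding p3_def by (rule avgc_mono) simp
  then show ?thesis by (simp add: avgc_def)
qed

lemma avgc_add: "avgc n s c (\<lambda>f. \<phi> f + \<psi> f) = avgc n s c \<phi> + avgc n s c \<psi>"
  unfolding avgc_def by (simp add: sum.distrib add_divide_distrib)

lemma avgc_diff: "avgc n s c (\<lambda>f. \<phi> f - \<psi> f) = avgc n s c \<phi> - avgc n s c \<psi>"
  unfolding avgc_def by (simp add: sum_subtractf diff_divide_distrib)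

lemma avgc_cmult: "avgc n s c (\<lambda>f. k * \<phi> f) = k * avgc n s c \<phi>"
  unfolding avgc_def by (simp add: sum_distrib_left[symmetric])

lemma edge_card: "e \<in> edges n \<Longrightarrow> card e = 2"
  by (auto simp: edges_def)

lemma edge_sub: "e \<in> edges n \<Longrightarrow> e \<subseteq> {..<n}"
  by (auto simp: edges_def)

lemma edge_inter: "e \<in> edges n \<Longrightarrow> e' \<in> edges n \<Longrightarrow> e \<noteq> e' \<Longrightarrow> card (e \<inter> e') \<le> 1"
proof -
  assume a: "e \<in> edges n" "e' \<in> edges n" "e \<noteq> e'"
  have fe: "finite e" "finite e'" using a by (auto simp: edges_def)
  show ?thesis
  proof (rule ccontr)
    assume "\<not> card (e \<inter> e') \<le> 1"
    then have "card (e \<inter> e') \<ge> 2" by simp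
    moreover have "card (e \<inter> e') \<le> card e" "card (e \<inter> e') \<le> card e'" using fe by (auto intro: card_mono)
    ultimately have "card (e \<inter> e') = card e" "card (e \<inter> e') = card e'" using edge_card a by auto
    then have "e \<inter> e' = e" "e \<inter> e' = e'"
      using card_subset_eq[of e "e \<inter> e'"] card_subset_eq[of e' "e \<inter> e'"] fe by auto
    then show False using a(3) by simp
  qed
qed

lemma Sigma2_pairs:
  assumes "E \<subseteq> edges n"
  shows "Sigma2 n E = (\<Sum>e\<in>E. \<Sum>e'\<in>E. real (card (e \<inter> e')))"
proof -
  have fE: "finite E" using assms finite_edges by (rule finite_subset)
  have dg: "real (degree E v) = (\<Sum>e\<in>E. of_bool (v \<in> e))" for v
    using fE by (simp add: degree_def sum_of_bool_eq Int_def)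
  have "Sigma2 n E = (\<Sum>v<n. \<Sum>e\<in>E. \<Sum>e'\<in>E. of_bool (v \<in> e) * of_bool (v \<in> e'))"
    unfolding Sigma2_def dg by (simp add: power2_eq_square sum_product)
  also have "\<dots> = (\<Sum>e\<in>E. \<Sum>e'\<in>E. \<Sum>v<n. of_bool (v \<in> e) * of_bool (v \<in> e'))"
    by (subst sum.swap) (simp add: sum.swap[of _ "{..<n}"])
  also have "\<dots> = (\<Sum>e\<in>E. \<Sum>e'\<in>E. real (card (e \<inter> e')))"
  proof (intro sum.cong refl)
    fix e e' assume "e \<in> E" "e' \<in> E"
    then have sub: "e \<subseteq> {..<n}" using assms edge_sub by auto
    have "(\<Sum>v<n. of_bool (v \<in> e) * of_bool (v \<in> e') :: real) = (\<Sum>v<n. of_bool (v \<in> e \<inter> e'))"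
      by (intro sum.cong) auto
    also have "\<dots> = real (card ({..<n} \<inter> {v. v \<in> e \<inter> e'}))" by (simp add: sum_of_bool_eq)
    also have "{..<n} \<inter> {v. v \<in> e \<inter> e'} = e \<inter> e'" using sub by auto
    finally show "(\<Sum>v<n. of_bool (v \<in> e) * of_bool (v \<in> e') :: real) = real (card (e \<inter> e'))" .
  qed
  finally show ?thesis .
qed

context
  fixes n s :: nat and c :: "nat \<Rightarrow> nat"
  assumes comp: "is_composition n s c"
begin

lemma X_avg: "e \<in> edges n \<Longrightarrow> avgc n s c (Xe e) = pp n s c"
proof -
  assume "e \<in> edges n"
  then obtain u v where uv: "u < n" "v < n" "u \<noteq> v" "e = {u,v}" by (auto simp: edges_def)
  then have "avgc n s c (Xe e) = avgc n s c (\<lambda>f. of_bool (f u = f v))" by (intro avgc_cong) (simp add: Xe_pair)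
  then show ?thesis using sym2[OF uv(1-3)] by simp
qed

lemma XX_avg:
  assumes e: "e \<in> edges n" and e': "e' \<in> edges n"
  shows "avgc n s c (\<lambda>f. Xe e f * Xe e' f) =
     (if e = e' then pp n s c else if card (e \<inter> e') = 1 then p3 n s c else p4 n s c)"
proof -
  obtain a b where ab: "a < n" "b < n" "a \<noteq> b" "e = {a,b}" using e by (auto simp: edges_def)
  obtain c' d where cd: "c' < n" "d < n" "c' \<noteq> d" "e' = {c',d}" using e' by (auto simp: edges_def)
  show ?thesis
  proof (cases "e = e'")
    case True
    then have "avgc n s c (\<lambda>f. Xe e f * Xe e' f) = avgc n s c (\<lambda>f. of_bool (f a = f b))"
      unfolding True[symmetric] ab(4) using ab(3) by (intro avgc_cong) (simp add: Xe_pair)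
    then show ?thesis using sym2[OF ab(1-3)] True by simp
  next
    case False
    show ?thesis
    proof (cases "a \<in> e' \<or> b \<in> e'")
      case True
      have "\<exists>x y z. x < n \<and> y < n \<and> z < n \<and> distinct [x,y,z] \<and> e = {x,y} \<and> e' = {x,z}"
      proof -
        consider "a = c'" | "a = d" | "b = c'" | "b = d" using True cd(4) by blast
        then show ?thesis
        proof cases
          case 1
          have "b \<noteq> d"
          proof
            assume "b = d" then have "e = e'" using 1 ab(4) cd(4) by simp
            then show False using False by simp
          qed
          then show ?thesis using 1 ab cd by (intro exI[of _ a] exI[of _ b] exI[of _ d]) simp
        next
          case 2
          have "b \<noteq> c'"
          proof
            assume "b = c'" then have "e = e'" using 2 ab(4) cd(4) by (simp add: insert_commute)
            then show False using False by simp
          qed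
          then show ?thesis using 2 ab cd by (intro exI[of _ a] exI[of _ b] exI[of _ c']) (simp add: insert_commute)
        next
          case 3
          have "a \<noteq> d"
          proof
            assume "a = d" then have "e = e'" using 3 ab(4) cd(4) by (simp add: insert_commute)
            then show False using False by simp
          qed
          then show ?thesis using 3 ab cd by (intro exI[of _ b] exI[of _ a] exI[of _ d]) (simp add: insert_commute)
        next
          case 4
          have "a \<noteq> c'"
          proof
            assume "a = c'" then have "e = e'" using 4 ab(4) cd(4) by (simp add: insert_commute)
            then show False using False by simp
          qed
          then show ?thesis using 4 ab cd by (intro exI[of _ b] exI[of _ a] exI[of _ c']) (simp add: insert_commute)
        qed
      qed
      then obtain x y z where xyz: "x < n" "y < n" "z < n" "distinct [x,y,z]" "e = {x,y}" "e' = {x,z}"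
        by blast
      have "card (e \<inter> e') = 1" using xyz by auto
      moreover have "avgc n s c (\<lambda>f. Xe e f * Xe e' f) = avgc n s c (\<lambda>f. of_bool (f x = f y \<and> f x = f z))"
        using xyz by (intro avgc_cong) (auto simp: Xe_pair)
      ultimately show ?thesis using sym3[OF xyz(1-4)] False by simp
    next
      case False2: False
      then have dis: "distinct [a,b,c',d]" using ab cd by auto
      have "card (e \<inter> e') = 0" using False2 ab by auto
      moreover have "avgc n s c (\<lambda>f. Xe e f * Xe e' f) = avgc n s c (\<lambda>f. of_bool (f a = f b \<and> f c' = f d))"
        using ab cd by (intro avgc_cong) (auto simp: Xe_pair)
      ultimately show ?thesis using sym4[OF ab(1,2) cd(1,2) dis] False by simp
    qed
  qed
qed


lemma var_graph:
  assumes E: "E \<subseteq> edges n"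
  shows "avgc n s c (\<lambda>f. ((\<Sum>e\<in>E. Xe e f) - pp n s c * real (card E))^2)
     = (\<Sum>e\<in>E. \<Sum>e'\<in>E. avgc n s c (\<lambda>f. Xe e f * Xe e' f) - pp n s c ^ 2)"
proof -
  let ?p = "pp n s c"
  have fE: "finite E" using E finite_edges by (rule finite_subset)
  have "((\<Sum>e\<in>E. Xe e f) - ?p * real (card E))^2 = (\<Sum>e\<in>E. \<Sum>e'\<in>E. (Xe e f - ?p) * (Xe e' f - ?p))" for f
  proof -
    have "(\<Sum>e\<in>E. Xe e f) - ?p * real (card E) = (\<Sum>e\<in>E. Xe e f - ?p)"
      by (simp add: sum_subtractf mult.commute)
    then show ?thesis by (simp add: power2_eq_square sum_product)
  qed
  then have "avgc n s c (\<lambda>f. ((\<Sum>e\<in>E. Xe e f) - ?p * real (card E))^2)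
      = (\<Sum>e\<in>E. \<Sum>e'\<in>E. avgc n s c (\<lambda>f. (Xe e f - ?p) * (Xe e' f - ?p)))"
    by (simp add: avgc_sum)
  also have "\<dots> = (\<Sum>e\<in>E. \<Sum>e'\<in>E. avgc n s c (\<lambda>f. Xe e f * Xe e' f) - ?p ^ 2)"
  proof (intro sum.cong refl)
    fix e e' assume ee: "e \<in> E" "e' \<in> E"
    have "(\<lambda>f. (Xe e f - ?p) * (Xe e' f - ?p)) = (\<lambda>f. (Xe e f * Xe e' f + ?p * ?p) - (?p * Xe e f + ?p * Xe e' f))"
      by (auto simp: algebra_simps)
    then have "avgc n s c (\<lambda>f. (Xe e f - ?p) * (Xe e' f - ?p)) =
       avgc n s c (\<lambda>f. Xe e f * Xe e' f) + ?p * ?p - (?p * avgc n s c (Xe e) + ?p * avgc n s c (Xe e'))"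
      by (simp add: avgc_diff avgc_add avgc_cmult avgc_const[OF comp])
    also have "\<dots> = avgc n s c (\<lambda>f. Xe e f * Xe e' f) - ?p ^ 2"
    proof -
      have "e \<in> edges n" "e' \<in> edges n" using ee E by auto
      then show ?thesis using X_avg by (simp add: power2_eq_square)
    qed
    finally show "avgc n s c (\<lambda>f. (Xe e f - ?p) * (Xe e' f - ?p)) = avgc n s c (\<lambda>f. Xe e f * Xe e' f) - ?p ^ 2" .
  qed
  finally show ?thesis .
qed

lemma var_bounds:
  assumes E: "E \<subseteq> edges n" and n6: "6 \<le> n" and k0: "0 \<le> \<kappa>" and kp: "\<kappa> \<le> p3 n s c - pp n s c ^ 2"
  shows "\<kappa> / 2 * Sigma2 n E - 16 / real n * real (card E) ^ 2
           \<le> avgc n s c (\<lambda>f. ((\<Sum>e\<in>E. Xe e f) - pp n s c * real (card E))^2)"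
    and "avgc n s c (\<lambda>f. ((\<Sum>e\<in>E. Xe e f) - pp n s c * real (card E))^2)
           \<le> Sigma2 n E + 16 / real n * real (card E) ^ 2"
proof -
  let ?p = "pp n s c"
  define h where "h e e' = avgc n s c (\<lambda>f. Xe e f * Xe e' f) - ?p ^ 2" for e e'
  have fE: "finite E" using E finite_edges by (rule finite_subset)
  have p4c: "\<bar>p4 n s c - ?p ^ 2\<bar> \<le> 16 / real n" using p4_close[OF comp n6] .
  have p1: "?p \<le> 1" using pp_le1[OF comp] .
  have p0: "?p \<ge> 0" using pp_nonneg[OF comp] n6 by simp
  have p31: "p3 n s c \<le> 1" using p3_le_pp[of n s c] p1 by simp
  have p30: "p3 n s c \<ge> 0" by (rule p3_nonneg)
  have sq: "?p ^ 2 \<ge> 0" by simp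
  have pw: "\<kappa> / 2 * real (card (e \<inter> e')) - 16 / real n \<le> h e e' \<and> h e e' \<le> real (card (e \<inter> e')) + 16 / real n"
    if ee: "e \<in> E" "e' \<in> E" for e e'
  proof -
    have ee': "e \<in> edges n" "e' \<in> edges n" using ee E by auto
    have n16: "16 / real n \<ge> 0" by simp
    show ?thesis
    proof (cases "e = e'")
      case True
      then have c2: "real (card (e \<inter> e')) = 2" using edge_card ee' by simp
      have hh: "h e e' = ?p - ?p ^ 2" using XX_avg[OF ee'] True by (simp add: h_def)
      have "?p - ?p^2 \<ge> \<kappa>" using kp p3_le_pp[of n s c] by simp
      then show ?thesis unfolding c2 hh using p1 sq n16 by linarith
    next
      case False
      show ?thesis
      proof (cases "card (e \<inter> e') = 1")
        case True
        then have hh: "h e e' = p3 n s c - ?p ^ 2" using XX_avg[OF ee'] False by (simp add: h_def)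
        have c1: "real (card (e \<inter> e')) = 1" using True by simp
        show ?thesis unfolding hh c1 using kp k0 p31 sq n16 by linarith
      next
        case False2: False
        then have "card (e \<inter> e') = 0" using edge_inter[OF ee' False] by simp
        moreover have "h e e' = p4 n s c - ?p ^ 2" using XX_avg[OF ee'] False False2 by (simp add: h_def)
        ultimately show ?thesis using p4c by (simp add: abs_le_iff)
      qed
    qed
  qed
  have V: "avgc n s c (\<lambda>f. ((\<Sum>e\<in>E. Xe e f) - ?p * real (card E))^2) = (\<Sum>e\<in>E. \<Sum>e'\<in>E. h e e')"
    using var_graph[OF E] by (simp add: h_def)
  have S2: "Sigma2 n E = (\<Sum>e\<in>E. \<Sum>e'\<in>E. real (card (e \<inter> e')))" using Sigma2_pairs[OF E] .
  have "(\<Sum>e\<in>E. \<Sum>e'\<in>E. \<kappa> / 2 * real (card (e \<inter> e')) - 16 / real n) \<le> (\<Sum>e\<in>E. \<Sum>e'\<in>E. h e e')"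
    using pw by (intro sum_mono) auto
  moreover have "(\<Sum>e\<in>E. \<Sum>e'\<in>E. \<kappa> / 2 * real (card (e \<inter> e')) - 16 / real n) = \<kappa> / 2 * Sigma2 n E - 16 / real n * real (card E) ^ 2"
    unfolding S2 by (simp add: sum_subtractf sum_distrib_left power2_eq_square algebra_simps)
  ultimately show "\<kappa> / 2 * Sigma2 n E - 16 / real n * real (card E) ^ 2
           \<le> avgc n s c (\<lambda>f. ((\<Sum>e\<in>E. Xe e f) - ?p * real (card E))^2)" using V by simp
  have "(\<Sum>e\<in>E. \<Sum>e'\<in>E. h e e') \<le> (\<Sum>e\<in>E. \<Sum>e'\<in>E. real (card (e \<inter> e')) + 16 / real n)"
    using pw by (intro sum_mono) auto
  moreover have "(\<Sum>e\<in>E. \<Sum>e'\<in>E. real (card (e \<inter> e')) + 16 / real n) = Sigma2 n E + 16 / real n * real (card E) ^ 2"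
    unfolding S2 by (simp add: sum.distrib power2_eq_square algebra_simps)
  ultimately show "avgc n s c (\<lambda>f. ((\<Sum>e\<in>E. Xe e f) - ?p * real (card E))^2)
           \<le> Sigma2 n E + 16 / real n * real (card E) ^ 2" using V by simp
qed

lemma mean_graph:
  assumes E: "E \<subseteq> edges n"
  shows "avgc n s c (\<lambda>f. \<Sum>e\<in>E. Xe e f) = pp n s c * real (card E)"
  using E by (simp add: avgc_sum X_avg subset_iff)

end


lemma prob_as_exp: "measure_pmf.prob P A = measure_pmf.expectation P (indicator A)"
  by (simp add: integral_indicator)

lemma markov_sq:
  assumes fin: "finite (set_pmf P)" and e: "0 < \<epsilon>"
  shows "measure_pmf.prob P {x. \<epsilon> < \<bar>Z x\<bar>} \<le> measure_pmf.expectation P (\<lambda>x. (Z x)^2) / \<epsilon>^2"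
proof -
  have "measure_pmf.prob P {x. \<epsilon> < \<bar>Z x\<bar>} = measure_pmf.expectation P (indicator {x. \<epsilon> < \<bar>Z x\<bar>})"
    by (rule prob_as_exp)
  also have "\<dots> \<le> measure_pmf.expectation P (\<lambda>x. (Z x)^2 / \<epsilon>^2)"
  proof (intro integral_mono integrable_measure_pmf_finite[OF fin])
    fix x
    show "indicator {x. \<epsilon> < \<bar>Z x\<bar>} x \<le> (Z x)^2 / \<epsilon>^2"
    proof (cases "\<epsilon> < \<bar>Z x\<bar>")
      case True
      then have "\<epsilon>^2 \<le> (Z x)^2" using e by (metis abs_le_square_iff abs_of_pos less_imp_le)
      then show ?thesis using True e by (simp add: indicator_def)
    next
      case False
      then show ?thesis by (simp add: indicator_def)
    qed
  qed
  also have "\<dots> = measure_pmf.expectation P (\<lambda>x. (Z x)^2) / \<epsilon>^2" by simp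
  finally show ?thesis .
qed

lemma markov1:
  assumes fin: "finite (set_pmf P)" and t: "0 < t" and nn: "\<And>x. Z x \<ge> 0"
  shows "measure_pmf.prob P {x. t < Z x} \<le> measure_pmf.expectation P Z / t"
proof -
  have "measure_pmf.prob P {x. t < Z x} = measure_pmf.expectation P (indicator {x. t < Z x})"
    by (rule prob_as_exp)
  also have "\<dots> \<le> measure_pmf.expectation P (\<lambda>x. Z x / t)"
  proof (intro integral_mono integrable_measure_pmf_finite[OF fin])
    fix x
    show "indicator {x. t < Z x} x \<le> Z x / t"
      using t nn[of x] by (auto simp: indicator_def)
  qed
  also have "\<dots> = measure_pmf.expectation P Z / t" by simp
  finally show ?thesis .
qed

lemma prob_union2:
  "measure_pmf.prob P {x. A x \<or> B x} \<le> measure_pmf.prob P {x. A x} + measure_pmf.prob P {x. B x}"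
proof -
  have "{x. A x \<or> B x} = {x. A x} \<union> {x. B x}" by auto
  then show ?thesis using measure_Un_le[of "{x. A x}" "measure_pmf P" "{x. B x}"] by simp
qed

lemma prob_mono_pred:
  "(\<And>x. A x \<Longrightarrow> B x) \<Longrightarrow> measure_pmf.prob P {x. A x} \<le> measure_pmf.prob P {x. B x}"
  by (intro measure_pmf.finite_measure_mono) auto

lemma exp_ind: "measure_pmf.expectation P (\<lambda>x. of_bool (A x)) = measure_pmf.prob P {x. A x}"
proof -
  have "(\<lambda>x. of_bool (A x) :: real) = indicator {x. A x}" by (auto simp: indicator_def)
  then show ?thesis by (simp add: integral_indicator)
qed

lemma exp_cong_pmf:
  "(\<And>x. x \<in> set_pmf P \<Longrightarrow> f x = g x) \<Longrightarrow> measure_pmf.expectation P f = measure_pmf.expectation P (g::_\<Rightarrow>real)"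
  by (intro integral_cong_AE) (auto simp: AE_measure_pmf_iff)

lemma exp_mono_pmf:
  "finite (set_pmf P) \<Longrightarrow> (\<And>x. x \<in> set_pmf P \<Longrightarrow> f x \<le> g x) \<Longrightarrow> measure_pmf.expectation P f \<le> measure_pmf.expectation P (g::_\<Rightarrow>real)"
  by (intro integral_mono_AE integrable_measure_pmf_finite) (auto simp: AE_measure_pmf_iff)

lemma exp_nonneg_pmf:
  "finite (set_pmf P) \<Longrightarrow> (\<And>x. x \<in> set_pmf P \<Longrightarrow> 0 \<le> f x) \<Longrightarrow> 0 \<le> measure_pmf.expectation P (f::_\<Rightarrow>real)"
  using exp_mono_pmf[of P "\<lambda>_. 0" f] by simp

lemma exp_add_pmf:
  "finite (set_pmf P) \<Longrightarrow> measure_pmf.expectation P (\<lambda>x. f x + g x) = measure_pmf.expectation P f + measure_pmf.expectation P (g::_\<Rightarrow>real)"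
  by (intro Bochner_Integration.integral_add integrable_measure_pmf_finite)

lemma exp_diff_pmf:
  "finite (set_pmf P) \<Longrightarrow> measure_pmf.expectation P (\<lambda>x. f x - g x) = measure_pmf.expectation P f - measure_pmf.expectation P (g::_\<Rightarrow>real)"
  by (intro Bochner_Integration.integral_diff integrable_measure_pmf_finite)

context
  fixes n s :: nat and c :: "nat \<Rightarrow> nat" and G :: "nat set set pmf"
  assumes comp: "is_composition n s c" and gr: "set_pmf G \<subseteq> simple_graphs n"
begin

lemma finG: "finite (set_pmf G)"
  using gr finite_simple_graphs by (rule finite_subset)

lemma joint_set: "set_pmf (colored_graph G n s c) \<subseteq> simple_graphs n \<times> colorings n s c"
  using gr colorings_nonempty[OF comp] colorings_finite[of n s c]
  by (auto simp: colored_graph_def set_bind_pmf)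

lemma finJ: "finite (set_pmf (colored_graph G n s c))"
  using joint_set by (rule finite_subset) (simp add: finite_simple_graphs colorings_finite)

lemma joint_exp:
  "measure_pmf.expectation (colored_graph G n s c) \<phi> = measure_pmf.expectation G (\<lambda>E. avgc n s c (\<lambda>f. \<phi> (E, f)))"
proof -
  have "measure_pmf.expectation (colored_graph G n s c) \<phi> =
     (\<Sum>E\<in>simple_graphs n. pmf G E *\<^sub>R measure_pmf.expectation (map_pmf (\<lambda>f. (E, f)) (pmf_of_set (colorings n s c))) \<phi>)"
    unfolding colored_graph_def
    using gr colorings_nonempty[OF comp] colorings_finite[of n s c] finite_simple_graphs
    by (intro pmf_expectation_bind) auto
  also have "\<dots> = (\<Sum>E\<in>simple_graphs n. avgc n s c (\<lambda>f. \<phi> (E, f)) * pmf G E)"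
    using colorings_nonempty[OF comp] colorings_finite[of n s c]
    by (intro sum.cong refl) (simp add: integral_map_pmf integral_pmf_of_set avgc_def)
  also have "\<dots> = measure_pmf.expectation G (\<lambda>E. avgc n s c (\<lambda>f. \<phi> (E, f)))"
    using gr finite_simple_graphs by (intro integral_measure_pmf_real[symmetric]) auto
  finally show ?thesis .
qed

end


definition mu :: "nat set set pmf \<Rightarrow> real" where
  "mu G = measure_pmf.expectation G num_edges"
definition Qf :: "nat set set pmf \<Rightarrow> real" where
  "Qf G = measure_pmf.expectation G (\<lambda>E. (num_edges E / mu G - 1)^2)"
definition Af :: "nat \<Rightarrow> nat set set pmf \<Rightarrow> real" where
  "Af n G = measure_pmf.expectation G (Sigma2 n) / mu G ^ 2"
definition Mx :: "nat set set \<times> (nat \<Rightarrow> nat) \<Rightarrow> real" where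
  "Mx x = mono_edges (fst x) (snd x)"
definition EMf :: "nat \<Rightarrow> nat \<Rightarrow> (nat \<Rightarrow> nat) \<Rightarrow> nat set set pmf \<Rightarrow> real" where
  "EMf n s c G = measure_pmf.expectation (colored_graph G n s c) Mx"
definition Df :: "nat \<Rightarrow> nat \<Rightarrow> (nat \<Rightarrow> nat) \<Rightarrow> nat set set pmf \<Rightarrow> nat set set \<times> (nat \<Rightarrow> nat) \<Rightarrow> real" where
  "Df n s c G x = (Mx x - pp n s c * num_edges (fst x)) / (pp n s c * mu G)"
definition Vf :: "nat \<Rightarrow> nat \<Rightarrow> (nat \<Rightarrow> nat) \<Rightarrow> nat set set pmf \<Rightarrow> real" where
  "Vf n s c G = measure_pmf.expectation (colored_graph G n s c) (\<lambda>x. (Df n s c G x)^2)"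

lemma abs_half: "\<epsilon> < \<bar>(a::real) + b\<bar> \<Longrightarrow> \<epsilon> / 2 < \<bar>a\<bar> \<or> \<epsilon> / 2 < \<bar>b\<bar>"
  by arith

lemma abs_half2: "\<epsilon> < \<bar>(a::real) - b\<bar> \<Longrightarrow> \<epsilon> / 2 < \<bar>a\<bar> \<or> \<epsilon> / 2 < \<bar>b\<bar>"
  by arith

lemma sq_bound: "(x::real)^2 \<le> 2 * (x - 1)^2 + 2"
proof -
  have "2 * (x - 1)^2 + 2 - x^2 = (x - 2)^2" by (simp add: power2_eq_square algebra_simps)
  then show ?thesis by (metis diff_ge_0_iff_ge zero_le_power2)
qed

context
  fixes n s :: nat and c :: "nat \<Rightarrow> nat" and G :: "nat set set pmf" and \<delta>1 \<kappa> :: real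
  assumes comp: "is_composition n s c" and gr: "set_pmf G \<subseteq> simple_graphs n"
    and n6: "6 \<le> n" and d1: "0 < \<delta>1" and pbig: "\<delta>1 / 2 \<le> pp n s c"
    and k0: "0 < \<kappa>" and kap: "\<kappa> \<le> p3 n s c - pp n s c ^ 2"
    and mupos: "mu G > 0"
begin

lemma p_pos: "pp n s c > 0" using d1 pbig by linarith

lemma supp_edges: "E \<in> set_pmf G \<Longrightarrow> E \<subseteq> edges n"
proof -
  assume "E \<in> set_pmf G"
  then have "E \<in> simple_graphs n" using gr by auto
  then show ?thesis by (simp add: simple_graphs_edges)
qed

lemma supp_fin: "E \<in> set_pmf G \<Longrightarrow> finite E"
  using supp_edges finite_edges finite_subset by blast

lemma EM_eq: "EMf n s c G = pp n s c * mu G"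
proof -
  have "EMf n s c G = measure_pmf.expectation G (\<lambda>E. avgc n s c (\<lambda>f. mono_edges E f))"
    unfolding EMf_def Mx_def using joint_exp[OF comp gr] by simp
  also have "\<dots> = measure_pmf.expectation G (\<lambda>E. pp n s c * num_edges E)"
  proof (rule exp_cong_pmf)
    fix E assume E: "E \<in> set_pmf G"
    have "avgc n s c (\<lambda>f. mono_edges E f) = avgc n s c (\<lambda>f. \<Sum>e\<in>E. Xe e f)"
      using supp_fin[OF E] by (simp add: mono_edges_sum)
    also have "\<dots> = pp n s c * real (card E)" using mean_graph[OF comp supp_edges[OF E]] .
    finally show "avgc n s c (\<lambda>f. mono_edges E f) = pp n s c * num_edges E" by (simp add: num_edges_def)
  qed
  also have "\<dots> = pp n s c * mu G" by (simp add: mu_def)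
  finally show ?thesis .
qed

definition W :: "nat set set \<Rightarrow> real" where
  "W E = avgc n s c (\<lambda>f. ((\<Sum>e\<in>E. Xe e f) - pp n s c * real (card E))^2)"

lemma Vf_eq: "Vf n s c G = measure_pmf.expectation G W / (pp n s c * mu G)^2"
proof -
  have "Vf n s c G = measure_pmf.expectation G (\<lambda>E. avgc n s c (\<lambda>f. (Df n s c G (E, f))^2))"
    unfolding Vf_def using joint_exp[OF comp gr] by simp
  also have "\<dots> = measure_pmf.expectation G (\<lambda>E. W E / (pp n s c * mu G)^2)"
  proof (rule exp_cong_pmf)
    fix E assume E: "E \<in> set_pmf G"
    have "avgc n s c (\<lambda>f. (Df n s c G (E, f))^2) = avgc n s c (\<lambda>f. ((\<Sum>e\<in>E. Xe e f) - pp n s c * real (card E))^2 / (pp n s c * mu G)^2)"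
      using supp_fin[OF E] by (intro avgc_cong) (simp add: Df_def Mx_def mono_edges_sum num_edges_def power_divide)
    also have "\<dots> = W E / (pp n s c * mu G)^2" by (simp add: avgc_def W_def sum_divide_distrib mult.commute)
    finally show "avgc n s c (\<lambda>f. (Df n s c G (E, f))^2) = W E / (pp n s c * mu G)^2" .
  qed
  also have "\<dots> = measure_pmf.expectation G W / (pp n s c * mu G)^2" by simp
  finally show ?thesis .
qed

lemma Em2_le: "measure_pmf.expectation G (\<lambda>E. num_edges E ^ 2) \<le> mu G ^ 2 * (2 * Qf G + 2)"
proof -
  have "measure_pmf.expectation G (\<lambda>E. num_edges E ^ 2) \<le> measure_pmf.expectation G (\<lambda>E. mu G ^ 2 * (2 * (num_edges E / mu G - 1)^2 + 2))"
  proof (rule exp_mono_pmf[OF finG[OF comp gr]])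
    fix E
    have "num_edges E ^ 2 = mu G ^ 2 * (num_edges E / mu G)^2" using mupos by (simp add: power_divide)
    also have "\<dots> \<le> mu G ^ 2 * (2 * (num_edges E / mu G - 1)^2 + 2)"
      by (intro mult_left_mono sq_bound) simp
    finally show "num_edges E ^ 2 \<le> mu G ^ 2 * (2 * (num_edges E / mu G - 1)^2 + 2)" .
  qed
  also have "\<dots> = mu G ^ 2 * (2 * Qf G + 2)"
    using finG[OF comp gr] by (simp add: Qf_def exp_add_pmf)
  finally show ?thesis .
qed

lemma W_bounds:
  "\<kappa> / 2 * measure_pmf.expectation G (Sigma2 n) - 16 / real n * measure_pmf.expectation G (\<lambda>E. num_edges E ^ 2)
     \<le> measure_pmf.expectation G W"
  "measure_pmf.expectation G W \<le> measure_pmf.expectation G (Sigma2 n) + 16 / real n * measure_pmf.expectation G (\<lambda>E. num_edges E ^ 2)"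
proof -
  have fG: "finite (set_pmf G)" using finG[OF comp gr] .
  have "measure_pmf.expectation G (\<lambda>E. \<kappa> / 2 * Sigma2 n E - 16 / real n * num_edges E ^ 2) \<le> measure_pmf.expectation G W"
    using var_bounds(1)[OF comp supp_edges n6 less_imp_le[OF k0] kap] fG
    by (intro exp_mono_pmf) (auto simp: W_def num_edges_def)
  then show "\<kappa> / 2 * measure_pmf.expectation G (Sigma2 n) - 16 / real n * measure_pmf.expectation G (\<lambda>E. num_edges E ^ 2)
     \<le> measure_pmf.expectation G W" using fG by (simp add: exp_diff_pmf)
  have "measure_pmf.expectation G W \<le> measure_pmf.expectation G (\<lambda>E. Sigma2 n E + 16 / real n * num_edges E ^ 2)"
    using var_bounds(2)[OF comp supp_edges n6 less_imp_le[OF k0] kap] fG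
    by (intro exp_mono_pmf) (auto simp: W_def num_edges_def)
  then show "measure_pmf.expectation G W \<le> measure_pmf.expectation G (Sigma2 n) + 16 / real n * measure_pmf.expectation G (\<lambda>E. num_edges E ^ 2)"
    using fG by (simp add: exp_add_pmf)
qed

lemma fJ: "finite (set_pmf (colored_graph G n s c))" using finJ[OF comp gr] .
lemma fG: "finite (set_pmf G)" using finG[OF comp gr] .

lemma Q_nonneg: "Qf G \<ge> 0"
  unfolding Qf_def by (rule exp_nonneg_pmf[OF fG]) simp

lemma A_nonneg: "Af n G \<ge> 0"
proof -
  have "measure_pmf.expectation G (Sigma2 n) \<ge> 0"
    by (rule exp_nonneg_pmf[OF fG]) (simp add: Sigma2_def sum_nonneg)
  then show ?thesis by (simp add: Af_def)
qed

lemma V_nonneg: "Vf n s c G \<ge> 0"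
  unfolding Vf_def by (rule exp_nonneg_pmf[OF fJ]) simp

lemma exp_fst: "measure_pmf.expectation (colored_graph G n s c) (\<lambda>x. (h::_\<Rightarrow>real) (fst x)) = measure_pmf.expectation G h"
  using joint_exp[OF comp gr, of "\<lambda>x. h (fst x)"] by (simp add: avgc_const[OF comp])

lemma p_le1: "pp n s c \<le> 1" using pp_le1[OF comp] .

lemma p_inv: "1 / pp n s c ^ 2 \<le> 4 / \<delta>1^2"
proof -
  have "(\<delta>1 / 2)^2 \<le> pp n s c ^ 2" using pbig d1 by (intro power_mono) auto
  then have "\<delta>1^2 / 4 \<le> pp n s c ^ 2" by (simp add: power_divide)
  then show ?thesis using d1 p_pos by (simp add: field_simps)
qed

lemma L3: "Vf n s c G \<le> (Af n G + 16 / real n * (2 * Qf G + 2)) * (4 / \<delta>1^2)"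
proof -
  let ?p = "pp n s c" and ?m = "mu G"
  have pm: "(?p * ?m)^2 > 0" using p_pos mupos by simp
  have "Vf n s c G \<le> (measure_pmf.expectation G (Sigma2 n) + 16 / real n * (?m^2 * (2 * Qf G + 2))) / (?p * ?m)^2"
  proof -
    have "measure_pmf.expectation G W \<le> measure_pmf.expectation G (Sigma2 n) + 16 / real n * (?m^2 * (2 * Qf G + 2))"
      using W_bounds(2) Em2_le by (smt (verit) divide_nonneg_nonneg mult_left_mono of_nat_0_le_iff)
    then show ?thesis unfolding Vf_eq using pm by (intro divide_right_mono) auto
  qed
  also have "\<dots> = (Af n G + 16 / real n * (2 * Qf G + 2)) / ?p^2"
    using mupos p_pos by (simp add: Af_def field_simps power2_eq_square)
  also have "\<dots> \<le> (Af n G + 16 / real n * (2 * Qf G + 2)) * (4 / \<delta>1^2)"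
  proof -
    have nn: "Af n G + 16 / real n * (2 * Qf G + 2) \<ge> 0" using A_nonneg Q_nonneg by simp
    have "1 / ?p^2 \<le> 4 / \<delta>1^2" by (rule p_inv)
    then show ?thesis using nn by (metis mult_left_mono times_divide_eq_right mult.right_neutral)
  qed
  finally show ?thesis .
qed

lemma L4: "Af n G \<le> (2 / \<kappa>) * (Vf n s c G + 16 / real n * (2 * Qf G + 2))"
proof -
  let ?p = "pp n s c" and ?m = "mu G"
  have EW: "measure_pmf.expectation G W = Vf n s c G * (?p * ?m)^2"
    using Vf_eq p_pos mupos by simp
  have "Vf n s c G * (?p * ?m)^2 \<le> Vf n s c G * ?m^2"
  proof -
    have "?p^2 \<le> 1" using p_le1 p_pos by (simp add: power_le_one)
    then have "(?p * ?m)^2 \<le> ?m^2" by (simp add: power_mult_distrib mult_left_le_one_le)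
    then show ?thesis using V_nonneg by (rule mult_left_mono)
  qed
  then have "\<kappa> / 2 * measure_pmf.expectation G (Sigma2 n) \<le> Vf n s c G * ?m^2 + 16 / real n * (?m^2 * (2 * Qf G + 2))"
    using W_bounds(1) Em2_le EW by (smt (verit) divide_nonneg_nonneg mult_left_mono of_nat_0_le_iff)
  then have "\<kappa> / 2 * Af n G \<le> Vf n s c G + 16 / real n * (2 * Qf G + 2)"
    using mupos by (simp add: Af_def field_simps power2_eq_square)
  then show ?thesis using k0 by (simp add: field_simps)
qed

lemma Y_decomp: "Mx x / EMf n s c G - 1 = Df n s c G x + (num_edges (fst x) / mu G - 1)"
  using p_pos mupos by (simp add: EM_eq Df_def field_simps)

lemma L2:
  assumes e: "0 < \<epsilon>"
  shows "measure_pmf.prob (colored_graph G n s c) {x. \<epsilon> < \<bar>Mx x / EMf n s c G - 1\<bar>}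
           \<le> 4 * Vf n s c G / \<epsilon>^2 + 4 * Qf G / \<epsilon>^2"
proof -
  let ?J = "colored_graph G n s c"
  have "measure_pmf.prob ?J {x. \<epsilon> < \<bar>Mx x / EMf n s c G - 1\<bar>}
     \<le> measure_pmf.prob ?J {x. \<epsilon>/2 < \<bar>Df n s c G x\<bar> \<or> \<epsilon>/2 < \<bar>num_edges (fst x) / mu G - 1\<bar>}"
    by (rule prob_mono_pred) (rule abs_half, simp add: Y_decomp)
  also have "\<dots> \<le> measure_pmf.prob ?J {x. \<epsilon>/2 < \<bar>Df n s c G x\<bar>} + measure_pmf.prob ?J {x. \<epsilon>/2 < \<bar>num_edges (fst x) / mu G - 1\<bar>}"
    by (rule prob_union2)
  also have "\<dots> \<le> Vf n s c G / (\<epsilon>/2)^2 + Qf G / (\<epsilon>/2)^2"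
  proof (intro add_mono)
    show "measure_pmf.prob ?J {x. \<epsilon>/2 < \<bar>Df n s c G x\<bar>} \<le> Vf n s c G / (\<epsilon>/2)^2"
      unfolding Vf_def by (rule markov_sq[OF fJ]) (use e in simp)
    have "measure_pmf.prob ?J {x. \<epsilon>/2 < \<bar>num_edges (fst x) / mu G - 1\<bar>}
       \<le> measure_pmf.expectation ?J (\<lambda>x. (num_edges (fst x) / mu G - 1)^2) / (\<epsilon>/2)^2"
      by (rule markov_sq[OF fJ]) (use e in simp)
    then show "measure_pmf.prob ?J {x. \<epsilon>/2 < \<bar>num_edges (fst x) / mu G - 1\<bar>} \<le> Qf G / (\<epsilon>/2)^2"
      using exp_fst[of "\<lambda>E. (num_edges E / mu G - 1)^2"] by (simp add: Qf_def)
  qed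
  also have "\<dots> = 4 * Vf n s c G / \<epsilon>^2 + 4 * Qf G / \<epsilon>^2" by (simp add: power_divide mult.commute)
  finally show ?thesis .
qed

lemma Mx_bounds: "x \<in> set_pmf (colored_graph G n s c) \<Longrightarrow> 0 \<le> Mx x \<and> Mx x \<le> num_edges (fst x)"
proof -
  assume "x \<in> set_pmf (colored_graph G n s c)"
  then have "fst x \<in> simple_graphs n" using joint_set[OF comp gr] by auto
  then have "finite (fst x)" using finite_edges finite_subset by (auto simp: simple_graphs_edges)
  then show ?thesis unfolding Mx_def mono_edges_def num_edges_def by (auto intro: card_mono)
qed

lemma L5:
  assumes e: "0 < \<epsilon>"
  shows "Vf n s c G \<le> \<epsilon>^2 + (4 / \<delta>1^2) * (2 * Qf G + 2 * (measure_pmf.prob (colored_graph G n s c) {x. \<epsilon>/2 < \<bar>Mx x / EMf n s c G - 1\<bar>} + 4 * Qf G / \<epsilon>^2))"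
proof -
  let ?J = "colored_graph G n s c" and ?p = "pp n s c"
  let ?R = "\<lambda>x. num_edges (fst x) / mu G"
  define K where "K = 4 / \<delta>1^2"
  have K0: "K \<ge> 0" by (simp add: K_def)
  have Kp: "1 / ?p^2 \<le> K" unfolding K_def by (rule p_inv)
  have pw: "(Df n s c G x)^2 \<le> \<epsilon>^2 + K * (2 * (?R x - 1)^2 + 2 * of_bool (\<epsilon> < \<bar>Df n s c G x\<bar>))"
    if x: "x \<in> set_pmf ?J" for x
  proof -
    have mb: "0 \<le> Mx x" "Mx x \<le> num_edges (fst x)" using Mx_bounds[OF x] by auto
    have m0: "0 \<le> num_edges (fst x)" by (simp add: num_edges_def)
    have pm1: "?p * num_edges (fst x) \<le> num_edges (fst x)" using m0 p_le1 p_pos by (intro mult_left_le_one_le) auto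
    have pm0: "0 \<le> ?p * num_edges (fst x)" using m0 p_pos by simp
    have a1: "\<bar>Mx x - ?p * num_edges (fst x)\<bar> \<le> num_edges (fst x)"
      unfolding abs_le_iff using mb pm1 pm0 by linarith
    have pmu: "?p * mu G > 0" using p_pos mupos by simp
    have "\<bar>Df n s c G x\<bar> = \<bar>Mx x - ?p * num_edges (fst x)\<bar> / (?p * mu G)"
      unfolding Df_def using pmu by (simp add: abs_divide)
    also have "\<dots> \<le> num_edges (fst x) / (?p * mu G)"
      using a1 pmu by (intro divide_right_mono) auto
    also have "\<dots> = ?R x / ?p" by simp
    finally have a2: "\<bar>Df n s c G x\<bar> \<le> ?R x / ?p" .
    have "(Df n s c G x)^2 = \<bar>Df n s c G x\<bar>^2" by simp
    also have "\<dots> \<le> (?R x / ?p)^2" using a2 by (intro power_mono) auto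
    also have "\<dots> = ?R x ^2 * (1 / ?p^2)" by (simp add: power_divide power_mult_distrib)
    also have "\<dots> \<le> (2 * (?R x - 1)^2 + 2) * K"
      using Kp sq_bound[of "?R x"] by (intro mult_mono) auto
    finally have D2: "(Df n s c G x)^2 \<le> K * (2 * (?R x - 1)^2 + 2)" by (simp add: mult.commute)
    show ?thesis
    proof (cases "\<epsilon> < \<bar>Df n s c G x\<bar>")
      case True
      have "K * (2 * (?R x - 1)^2 + 2 * of_bool (\<epsilon> < \<bar>Df n s c G x\<bar>)) = K * (2 * (?R x - 1)^2 + 2)" using True by simp
      then show ?thesis using D2 zero_le_power2[of \<epsilon>] by linarith
    next
      case False
      then have "\<bar>Df n s c G x\<bar> \<le> \<epsilon>" by simp
      then have "\<bar>Df n s c G x\<bar>^2 \<le> \<epsilon>^2" by (intro power_mono) auto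
      then have "(Df n s c G x)^2 \<le> \<epsilon>^2" by simp
      moreover have "K * (2 * (?R x - 1)^2 + 2 * of_bool (\<epsilon> < \<bar>Df n s c G x\<bar>)) \<ge> 0" using K0 by simp
      ultimately show ?thesis by linarith
    qed
  qed
  have "Vf n s c G \<le> measure_pmf.expectation ?J (\<lambda>x. \<epsilon>^2 + K * (2 * (?R x - 1)^2 + 2 * of_bool (\<epsilon> < \<bar>Df n s c G x\<bar>)))"
    unfolding Vf_def by (rule exp_mono_pmf[OF fJ pw])
  also have "\<dots> = \<epsilon>^2 + K * (2 * measure_pmf.expectation ?J (\<lambda>x. (?R x - 1)^2) + 2 * measure_pmf.expectation ?J (\<lambda>x. of_bool (\<epsilon> < \<bar>Df n s c G x\<bar>)))"
    using fJ by (simp add: exp_add_pmf)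
  also have "measure_pmf.expectation ?J (\<lambda>x. (?R x - 1)^2) = Qf G"
    using exp_fst[of "\<lambda>E. (num_edges E / mu G - 1)^2"] by (simp add: Qf_def)
  also have "measure_pmf.expectation ?J (\<lambda>x. of_bool (\<epsilon> < \<bar>Df n s c G x\<bar>)) = measure_pmf.prob ?J {x. \<epsilon> < \<bar>Df n s c G x\<bar>}"
    by (rule exp_ind)
  finally have V1: "Vf n s c G \<le> \<epsilon>^2 + K * (2 * Qf G + 2 * measure_pmf.prob ?J {x. \<epsilon> < \<bar>Df n s c G x\<bar>})" .
  have P1: "measure_pmf.prob ?J {x. \<epsilon> < \<bar>Df n s c G x\<bar>} \<le> measure_pmf.prob ?J {x. \<epsilon>/2 < \<bar>Mx x / EMf n s c G - 1\<bar>} + 4 * Qf G / \<epsilon>^2"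
  proof -
    have "measure_pmf.prob ?J {x. \<epsilon> < \<bar>Df n s c G x\<bar>} \<le> measure_pmf.prob ?J {x. \<epsilon>/2 < \<bar>Mx x / EMf n s c G - 1\<bar> \<or> \<epsilon>/2 < \<bar>?R x - 1\<bar>}"
    proof (rule prob_mono_pred)
      fix x assume "\<epsilon> < \<bar>Df n s c G x\<bar>"
      moreover have "Df n s c G x = (Mx x / EMf n s c G - 1) - (?R x - 1)" by (simp add: Y_decomp)
      ultimately show "\<epsilon>/2 < \<bar>Mx x / EMf n s c G - 1\<bar> \<or> \<epsilon>/2 < \<bar>?R x - 1\<bar>"
        using abs_half2 by metis
    qed
    also have "\<dots> \<le> measure_pmf.prob ?J {x. \<epsilon>/2 < \<bar>Mx x / EMf n s c G - 1\<bar>} + measure_pmf.prob ?J {x. \<epsilon>/2 < \<bar>?R x - 1\<bar>}"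
      by (rule prob_union2)
    also have "measure_pmf.prob ?J {x. \<epsilon>/2 < \<bar>?R x - 1\<bar>} \<le> 4 * Qf G / \<epsilon>^2"
    proof -
      have "measure_pmf.prob ?J {x. \<epsilon>/2 < \<bar>?R x - 1\<bar>} \<le> measure_pmf.expectation ?J (\<lambda>x. (?R x - 1)^2) / (\<epsilon>/2)^2"
        by (rule markov_sq[OF fJ]) (use e in simp)
      also have "\<dots> = 4 * Qf G / \<epsilon>^2"
        using exp_fst[of "\<lambda>E. (num_edges E / mu G - 1)^2"] by (simp add: Qf_def power_divide mult.commute)
      finally show ?thesis .
    qed
    finally show ?thesis by simp
  qed
  have "K * (2 * Qf G + 2 * measure_pmf.prob ?J {x. \<epsilon> < \<bar>Df n s c G x\<bar>}) \<le>
     K * (2 * Qf G + 2 * (measure_pmf.prob ?J {x. \<epsilon>/2 < \<bar>Mx x / EMf n s c G - 1\<bar>} + 4 * Qf G / \<epsilon>^2))"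
    using P1 K0 by (intro mult_left_mono) auto
  then show ?thesis using V1 unfolding K_def by linarith
qed

end

lemma Sigma2_nonneg: "Sigma2 n E \<ge> 0"
  by (simp add: Sigma2_def sum_nonneg)

lemma Sigma2_le: "E \<subseteq> edges n \<Longrightarrow> Sigma2 n E \<le> 2 * num_edges E ^ 2"
proof -
  assume E: "E \<subseteq> edges n"
  have "Sigma2 n E \<le> (\<Sum>e\<in>E. \<Sum>e'\<in>E. 2)"
    unfolding Sigma2_pairs[OF E]
  proof (intro sum_mono)
    fix e e' assume "e \<in> E" "e' \<in> E"
    then have "e \<in> edges n" using E by auto
    then have "card (e \<inter> e') \<le> card e" by (intro card_mono) (auto simp: edges_def)
    then show "real (card (e \<inter> e')) \<le> 2" using edge_card[OF \<open>e \<in> edges n\<close>] by simp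
  qed
  also have "\<dots> = 2 * num_edges E ^ 2" by (simp add: num_edges_def power2_eq_square)
  finally show ?thesis .
qed

lemma Sigma2_empty: "Sigma2 n {} = 0"
  by (simp add: Sigma2_def degree_def)

context
  fixes n :: nat and G :: "nat set set pmf"
  assumes gr: "set_pmf G \<subseteq> simple_graphs n" and mupos: "mu G > 0"
begin

lemma fG': "finite (set_pmf G)" using gr finite_simple_graphs by (rule finite_subset)

lemma supp_edges': "E \<in> set_pmf G \<Longrightarrow> E \<subseteq> edges n"
proof -
  assume "E \<in> set_pmf G"
  then have "E \<in> simple_graphs n" using gr by auto
  then show ?thesis by (simp add: simple_graphs_edges)
qed

lemma L6:
  assumes e: "0 < \<epsilon>"
  shows "measure_pmf.prob G {E. \<epsilon> < \<bar>zeta n E - 0\<bar>} \<le> 16 * Qf G + 4 * Af n G / \<epsilon>^2"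
proof -
  let ?R = "\<lambda>E. num_edges E / mu G"
  have "measure_pmf.prob G {E. \<epsilon> < \<bar>zeta n E - 0\<bar>} \<le> measure_pmf.prob G {E. 1/4 < \<bar>?R E - 1\<bar> \<or> \<epsilon>^2/4 < Sigma2 n E / mu G ^ 2}"
  proof (rule prob_mono_pred)
    fix E assume z: "\<epsilon> < \<bar>zeta n E - 0\<bar>"
    show "1/4 < \<bar>?R E - 1\<bar> \<or> \<epsilon>^2/4 < Sigma2 n E / mu G ^ 2"
    proof (rule ccontr)
      assume "\<not> (1/4 < \<bar>?R E - 1\<bar> \<or> \<epsilon>^2/4 < Sigma2 n E / mu G ^ 2)"
      then have r: "\<bar>?R E - 1\<bar> \<le> 1/4" and sg: "Sigma2 n E / mu G ^ 2 \<le> \<epsilon>^2/4" by auto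
      have "?R E \<ge> 3/4" using r unfolding abs_le_iff by linarith
      then have m: "num_edges E \<ge> 3/4 * mu G" using mupos by (simp add: field_simps)
      then have m0: "num_edges E > 0" using mupos by linarith
      have "Sigma2 n E \<le> \<epsilon>^2/4 * mu G ^ 2" using sg mupos by (simp add: field_simps)
      also have "\<dots> \<le> \<epsilon>^2 * num_edges E ^ 2"
      proof -
        have "mu G / 2 \<le> num_edges E" using m mupos by linarith
        then have "(mu G / 2)^2 \<le> num_edges E ^ 2" using mupos by (intro power_mono) auto
        then have "mu G ^ 2 / 4 \<le> num_edges E ^ 2" by (simp add: power_divide)
        then have "\<epsilon>^2 * (mu G ^ 2 / 4) \<le> \<epsilon>^2 * num_edges E ^ 2" by (intro mult_left_mono) auto
        then show ?thesis by simp
      qed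
      also have "\<dots> = (\<epsilon> * num_edges E)^2" by (simp add: power_mult_distrib)
      finally have "sqrt (Sigma2 n E) \<le> \<epsilon> * num_edges E"
        using e m0 by (metis real_le_rsqrt real_sqrt_le_mono real_sqrt_pow2_iff zero_le_power2 mult_pos_pos less_imp_le abs_of_nonneg real_sqrt_abs)
      then have "zeta n E \<le> \<epsilon>" using m0 by (simp add: zeta_def divide_le_eq mult.commute)
      moreover have "zeta n E \<ge> 0" using m0 by (auto simp: zeta_def Sigma2_nonneg intro!: divide_nonneg_nonneg)
      ultimately show False using z by simp
    qed
  qed
  also have "\<dots> \<le> measure_pmf.prob G {E. 1/4 < \<bar>?R E - 1\<bar>} + measure_pmf.prob G {E. \<epsilon>^2/4 < Sigma2 n E / mu G ^ 2}"
    by (rule prob_union2)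
  also have "\<dots> \<le> 16 * Qf G + 4 * Af n G / \<epsilon>^2"
  proof (intro add_mono)
    have "measure_pmf.prob G {E. 1/4 < \<bar>?R E - 1\<bar>} \<le> measure_pmf.expectation G (\<lambda>E. (?R E - 1)^2) / (1/4)^2"
      by (rule markov_sq[OF fG']) simp
    then show "measure_pmf.prob G {E. 1/4 < \<bar>?R E - 1\<bar>} \<le> 16 * Qf G" by (simp add: Qf_def power_divide)
    have "measure_pmf.prob G {E. \<epsilon>^2/4 < Sigma2 n E / mu G ^ 2} \<le> measure_pmf.expectation G (\<lambda>E. Sigma2 n E / mu G ^ 2) / (\<epsilon>^2/4)"
      using e by (intro markov1[OF fG']) (auto simp: Sigma2_nonneg)
    then show "measure_pmf.prob G {E. \<epsilon>^2/4 < Sigma2 n E / mu G ^ 2} \<le> 4 * Af n G / \<epsilon>^2"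
      by (simp add: Af_def field_simps)
  qed
  finally show ?thesis .
qed

lemma L7:
  assumes e: "0 < \<epsilon>"
  shows "Af n G \<le> 4 * Qf G + 2 * \<epsilon>^2 + 4 * measure_pmf.prob G {E. \<epsilon> < \<bar>zeta n E - 0\<bar>}"
proof -
  let ?R = "\<lambda>E. num_edges E / mu G"
  have pw: "Sigma2 n E / mu G ^ 2 \<le> 4 * (?R E - 1)^2 + 2 * \<epsilon>^2 + 4 * of_bool (\<epsilon> < \<bar>zeta n E - 0\<bar>)"
    if E: "E \<in> set_pmf G" for E
  proof -
    have Ee: "E \<subseteq> edges n" using supp_edges'[OF E] .
    have fE: "finite E" using Ee finite_edges finite_subset by blast
    have rhs0: "4 * (?R E - 1)^2 + 2 * \<epsilon>^2 + 4 * of_bool (\<epsilon> < \<bar>zeta n E - 0\<bar>) \<ge> 0" by simp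
    show ?thesis
    proof (cases "E = {}")
      case True
      then show ?thesis using rhs0 by (simp add: Sigma2_empty)
    next
      case False
      then have m0: "num_edges E > 0" using fE by (simp add: num_edges_def card_gt_0_iff)
      define z where "z = zeta n E"
      have z0: "z \<ge> 0" using m0 by (auto simp: z_def zeta_def Sigma2_nonneg intro!: divide_nonneg_nonneg)
      have S: "Sigma2 n E = z^2 * num_edges E ^ 2"
        using m0 Sigma2_nonneg[of n E] by (simp add: z_def zeta_def power_divide)
      have z2: "z^2 \<le> 2"
      proof -
        have "z^2 * num_edges E ^ 2 \<le> 2 * num_edges E ^ 2" using S Sigma2_le[OF Ee] by simp
        then show ?thesis using m0 by simp
      qed
      have "Sigma2 n E / mu G ^ 2 = z^2 * ?R E ^ 2" using S mupos by (simp add: power_divide)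
      also have "\<dots> \<le> z^2 * (2 * (?R E - 1)^2 + 2)" by (intro mult_left_mono sq_bound) simp
      also have "\<dots> = 2 * z^2 * (?R E - 1)^2 + 2 * z^2" by (simp add: algebra_simps)
      also have "\<dots> \<le> 4 * (?R E - 1)^2 + 2 * z^2"
      proof -
        have "z^2 * (?R E - 1)^2 \<le> 2 * (?R E - 1)^2" using z2 by (intro mult_right_mono) auto
        then show ?thesis by simp
      qed
      also have "\<dots> \<le> 4 * (?R E - 1)^2 + 2 * \<epsilon>^2 + 4 * of_bool (\<epsilon> < \<bar>zeta n E - 0\<bar>)"
      proof (cases "\<epsilon> < \<bar>zeta n E - 0\<bar>")
        case True
        have "of_bool (\<epsilon> < \<bar>zeta n E - 0\<bar>) = (1::real)" using True by simp
        then show ?thesis using z2 zero_le_power2[of \<epsilon>] by linarith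
      next
        case False
        then have "z \<le> \<epsilon>" using z0 by (simp add: z_def)
        then have "z^2 \<le> \<epsilon>^2" using z0 by (intro power_mono) auto
        then show ?thesis by simp
      qed
      finally show ?thesis .
    qed
  qed
  have "Af n G = measure_pmf.expectation G (\<lambda>E. Sigma2 n E / mu G ^ 2)" by (simp add: Af_def)
  also have "\<dots> \<le> measure_pmf.expectation G (\<lambda>E. 4 * (?R E - 1)^2 + 2 * \<epsilon>^2 + 4 * of_bool (\<epsilon> < \<bar>zeta n E - 0\<bar>))"
    by (rule exp_mono_pmf[OF fG' pw])
  also have "\<dots> = 4 * Qf G + 2 * \<epsilon>^2 + 4 * measure_pmf.expectation G (\<lambda>E. of_bool (\<epsilon> < \<bar>zeta n E - 0\<bar>))"
    using fG' by (simp add: exp_add_pmf Qf_def)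
  also have "measure_pmf.expectation G (\<lambda>E. of_bool (\<epsilon> < \<bar>zeta n E - 0\<bar>)) = measure_pmf.prob G {E. \<epsilon> < \<bar>zeta n E - 0\<bar>}"
    by (rule exp_ind)
  finally show ?thesis .
qed

end


lemma tendsto_by_eps:
  fixes x :: "nat \<Rightarrow> real"
  assumes "\<And>r. r > 0 \<Longrightarrow> \<exists>g. g \<longlonglongrightarrow> 0 \<and> eventually (\<lambda>n. \<bar>x n\<bar> \<le> r + g n) sequentially"
  shows "x \<longlonglongrightarrow> 0"
proof (rule tendstoI)
  fix e :: real assume e: "e > 0"
  obtain g where g: "g \<longlonglongrightarrow> 0" "eventually (\<lambda>n. \<bar>x n\<bar> \<le> e/2 + g n) sequentially"
    using assms[of "e/2"] e by auto
  have "eventually (\<lambda>n. dist (g n) 0 < e/2) sequentially" using g(1) e by (intro tendstoD) auto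
  with g(2) show "eventually (\<lambda>n. dist (x n) 0 < e) sequentially"
    by eventually_elim auto
qed

lemma sqrt_ge_sq: "0 < (d::real) \<Longrightarrow> d \<le> sqrt x \<Longrightarrow> d^2 \<le> x"
  by (metis less_le_trans less_imp_le power_mono real_sqrt_gt_zero real_sqrt_pow2 not_le real_sqrt_le_0_iff)

theorem theorem1p2:
  fixes s :: nat
    and G :: "nat \<Rightarrow> nat set set pmf"
    and c :: "nat \<Rightarrow> nat \<Rightarrow> nat"
  assumes s2: "s \<ge> 2"
    and graphs: "\<And>n. set_pmf (G n) \<subseteq> simple_graphs n"
    and comp: "eventually (\<lambda>n. is_composition n s (c n)) sequentially"
    and away_boundary: "\<exists>\<delta>>0. eventually (\<lambda>n. \<forall>i<s. real (c n i) / real n \<ge> \<delta>) sequentially"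
    and away_center: "\<exists>\<delta>>0. eventually
          (\<lambda>n. sqrt (\<Sum>i<s. (real (c n i) / real n - 1 / real s) ^ 2) \<ge> \<delta>) sequentially"
    and Em_pos: "\<exists>\<delta>>0. eventually
          (\<lambda>n. measure_pmf.expectation (G n) num_edges \<ge> \<delta>) sequentially"
    and m_qm: "conv_quad_mean G
          (\<lambda>n E. num_edges E / measure_pmf.expectation (G n) num_edges) 1"
  shows "(conv_in_prob (\<lambda>n. colored_graph (G n) n s (c n))
            (\<lambda>n x. mono_edges (fst x) (snd x) /
                   measure_pmf.expectation (colored_graph (G n) n s (c n)) (\<lambda>x. mono_edges (fst x) (snd x))) 1
          \<longleftrightarrow> (\<lambda>n. measure_pmf.expectation (G n) (Sigma2 n) /
                   (measure_pmf.expectation (G n) num_edges) ^ 2) \<longlonglongrightarrow> 0)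
       \<and> ((\<lambda>n. measure_pmf.expectation (G n) (Sigma2 n) /
                   (measure_pmf.expectation (G n) num_edges) ^ 2) \<longlonglongrightarrow> 0
          \<longleftrightarrow> conv_in_prob G (\<lambda>n. zeta n) 0)"
proof -
  obtain \<delta>1 where d1: "\<delta>1 > 0" and ev1: "eventually (\<lambda>n. \<forall>i<s. real (c n i) / real n \<ge> \<delta>1) sequentially"
    using away_boundary by blast
  obtain \<delta>2 where d2: "\<delta>2 > 0" and ev2: "eventually (\<lambda>n. sqrt (\<Sum>i<s. (real (c n i) / real n - 1 / real s) ^ 2) \<ge> \<delta>2) sequentially"
    using away_center by blast
  obtain \<delta>m where dm: "\<delta>m > 0" and ev3: "eventually (\<lambda>n. measure_pmf.expectation (G n) num_edges \<ge> \<delta>m) sequentially"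
    using Em_pos by blast
  define \<kappa> where "\<kappa> = \<delta>1 * \<delta>2^2 / 2"
  have k0: "\<kappa> > 0" using d1 d2 by (simp add: \<kappa>_def)
  define good where "good n \<longleftrightarrow> is_composition n s (c n) \<and> 6 \<le> n \<and> \<delta>1 / 2 \<le> pp n s (c n)
      \<and> \<kappa> \<le> p3 n s (c n) - pp n s (c n) ^ 2 \<and> mu (G n) > 0" for n
  have ev_good: "eventually good sequentially"
  proof -
    define N where "N = max 6 (max (nat \<lceil>2 / \<delta>1\<rceil>) (nat \<lceil>6 / (\<delta>1 * \<delta>2^2)\<rceil>))"
    have evN: "eventually (\<lambda>n. N \<le> n) sequentially" by (rule eventually_ge_at_top)
    show ?thesis using comp ev1 ev2 ev3 evN
    proof eventually_elim
      case (elim n)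
      have n6: "6 \<le> n" using elim(5) by (simp add: N_def)
      have n0: "real n > 0" using n6 by simp
      have "real (nat \<lceil>2 / \<delta>1\<rceil>) \<le> real n" using elim(5) by (simp add: N_def)
      then have "2 / \<delta>1 \<le> real n" by linarith
      then have i1: "1 / real n \<le> \<delta>1 / 2" using d1 n0 by (simp add: field_simps)
      have "real (nat \<lceil>6 / (\<delta>1 * \<delta>2^2)\<rceil>) \<le> real n" using elim(5) by (simp add: N_def)
      then have "6 / (\<delta>1 * \<delta>2^2) \<le> real n" by linarith
      then have i2: "3 / real n \<le> \<delta>1 * \<delta>2^2 / 2" using d1 d2 n0 by (simp add: field_simps)
      have pp: "\<delta>1 / 2 \<le> pp n s (c n)"
        using pp_ge[OF elim(1), of \<delta>1] n6 elim(2) i1 by simp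
      have sq: "\<delta>2^2 \<le> (\<Sum>i<s. (real (c n i) / real n - 1 / real s) ^ 2)"
        using sqrt_ge_sq[OF d2 elim(3)] .
      have X: "\<delta>1 * \<delta>2^2 \<le> \<delta>1 * (\<Sum>i<s. (real (c n i) / real n - 1 / real s) ^ 2)"
        using sq d1 by (intro mult_left_mono) auto
      have Y: "p3 n s (c n) - pp n s (c n) ^ 2 \<ge> \<delta>1 * (\<Sum>i<s. (real (c n i) / real n - 1 / real s)^2) - 3 / real n"
        using gap[OF elim(1), of \<delta>1] n6 elim(2) d1 by simp
      have "\<kappa> \<le> p3 n s (c n) - pp n s (c n) ^ 2"
        unfolding \<kappa>_def using X Y i2 by linarith
      moreover have "mu (G n) > 0" using elim(4) dm by (simp add: mu_def)
      ultimately show "good n" using elim(1) n6 pp by (simp add: good_def)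
    qed
  qed
  define Q where "Q n = Qf (G n)" for n
  have "Q = (\<lambda>n. measure_pmf.expectation (G n) (\<lambda>x. (num_edges x / measure_pmf.expectation (G n) num_edges - 1)^2))"
    by (simp add: fun_eq_iff Q_def Qf_def mu_def)
  then have Q0: "Q \<longlonglongrightarrow> 0" using m_qm by (simp add: conv_quad_mean_def)
  define A where "A n = Af n (G n)" for n
  define V where "V n = Vf n s (c n) (G n)" for n
  define PY where "PY \<epsilon> n = measure_pmf.prob (colored_graph (G n) n s (c n)) {x. \<epsilon> < \<bar>Mx x / EMf n s (c n) (G n) - 1\<bar>}" for \<epsilon> n
  define PZ where "PZ \<epsilon> n = measure_pmf.prob (G n) {E. \<epsilon> < \<bar>zeta n E - 0\<bar>}" for \<epsilon> n
  have convY: "conv_in_prob (\<lambda>n. colored_graph (G n) n s (c n))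
            (\<lambda>n x. mono_edges (fst x) (snd x) /
                   measure_pmf.expectation (colored_graph (G n) n s (c n)) (\<lambda>x. mono_edges (fst x) (snd x))) 1
         \<longleftrightarrow> (\<forall>\<epsilon>>0. PY \<epsilon> \<longlonglongrightarrow> 0)"
    unfolding conv_in_prob_def PY_def EMf_def Mx_def by simp
  have convZ: "conv_in_prob G (\<lambda>n. zeta n) 0 \<longleftrightarrow> (\<forall>\<epsilon>>0. PZ \<epsilon> \<longlonglongrightarrow> 0)"
    unfolding conv_in_prob_def PZ_def by simp
  have Aeq: "(\<lambda>n. measure_pmf.expectation (G n) (Sigma2 n) / (measure_pmf.expectation (G n) num_edges) ^ 2) = A"
    by (simp add: fun_eq_iff A_def Af_def mu_def)
  have invn: "(\<lambda>n. 16 / real n) \<longlonglongrightarrow> 0"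
    using tendsto_mult_right_zero[OF lim_inverse_n', of 16] by simp
  have ctxE: "eventually (\<lambda>n. is_composition n s (c n) \<and> 6 \<le> n \<and> \<delta>1 / 2 \<le> pp n s (c n)
      \<and> \<kappa> \<le> p3 n s (c n) - pp n s (c n) ^ 2 \<and> mu (G n) > 0) sequentially"
    using ev_good by (rule eventually_mono) (simp add: good_def)
  have bV: "eventually (\<lambda>n. V n \<le> (A n + 16 / real n * (2 * Q n + 2)) * (4 / \<delta>1^2)) sequentially"
    using ctxE by eventually_elim (use L3[OF _ graphs _ d1 _ k0] in \<open>simp add: A_def V_def Q_def\<close>)
  have bA: "eventually (\<lambda>n. A n \<le> (2 / \<kappa>) * (V n + 16 / real n * (2 * Q n + 2))) sequentially"
    using ctxE by eventually_elim (use L4[OF _ graphs _ d1 _ k0] in \<open>simp add: A_def V_def Q_def\<close>)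
  have bA0: "eventually (\<lambda>n. 0 \<le> A n) sequentially"
    using ctxE by eventually_elim (auto simp: A_def intro!: A_nonneg[OF _ graphs _ d1 _ k0])
  have bV0: "eventually (\<lambda>n. 0 \<le> V n) sequentially"
    using ctxE by eventually_elim (use V_nonneg[OF _ graphs _ d1 _ k0] in \<open>simp add: V_def\<close>)
  have bPY: "eventually (\<lambda>n. PY \<epsilon> n \<le> 4 * V n / \<epsilon>^2 + 4 * Q n / \<epsilon>^2) sequentially" if e: "\<epsilon> > 0" for \<epsilon>
    using ctxE by eventually_elim (use L2[OF _ graphs _ d1 _ k0 _ _ e] in \<open>simp add: PY_def V_def Q_def\<close>)
  have bV5: "eventually (\<lambda>n. V n \<le> \<epsilon>^2 + (4 / \<delta>1^2) * (2 * Q n + 2 * (PY (\<epsilon>/2) n + 4 * Q n / \<epsilon>^2))) sequentially"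
    if e: "\<epsilon> > 0" for \<epsilon>
    using ctxE by eventually_elim (use L5[OF _ graphs _ d1 _ k0 _ _ e] in \<open>simp add: PY_def V_def Q_def\<close>)
  have bPZ: "eventually (\<lambda>n. PZ \<epsilon> n \<le> 16 * Q n + 4 * A n / \<epsilon>^2) sequentially" if e: "\<epsilon> > 0" for \<epsilon>
    using ctxE by eventually_elim (use L6[OF graphs _ e] in \<open>simp add: PZ_def A_def Q_def\<close>)
  have bA7: "eventually (\<lambda>n. A n \<le> 4 * Q n + 2 * \<epsilon>^2 + 4 * PZ \<epsilon> n) sequentially" if e: "\<epsilon> > 0" for \<epsilon>
    using ctxE by eventually_elim (use L7[OF graphs _ e] in \<open>simp add: PZ_def A_def Q_def\<close>)
  have PY_nn: "0 \<le> PY \<epsilon> n" for \<epsilon> n by (simp add: PY_def)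
  have PZ_nn: "0 \<le> PZ \<epsilon> n" for \<epsilon> n by (simp add: PZ_def)
  have I: "A \<longlonglongrightarrow> 0 \<Longrightarrow> (\<forall>\<epsilon>>0. PY \<epsilon> \<longlonglongrightarrow> 0)"
  proof (intro allI impI)
    fix \<epsilon> :: real assume A0: "A \<longlonglongrightarrow> 0" and e: "\<epsilon> > 0"
    define h where "h n = 4 * ((A n + 16 / real n * (2 * Q n + 2)) * (4 / \<delta>1^2)) / \<epsilon>^2 + 4 * Q n / \<epsilon>^2" for n
    have "h \<longlonglongrightarrow> 4 * ((0 + 0 * (2 * 0 + 2)) * (4 / \<delta>1^2)) / \<epsilon>^2 + 4 * 0 / \<epsilon>^2" unfolding h_def
      using e by (intro tendsto_intros A0 invn Q0) auto
    then have h0: "h \<longlonglongrightarrow> 0" by simp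
    have "eventually (\<lambda>n. PY \<epsilon> n \<le> h n) sequentially"
      using bPY[OF e] bV
    proof eventually_elim
      case (elim n)
      then have "PY \<epsilon> n \<le> 4 * V n / \<epsilon>^2 + 4 * Q n / \<epsilon>^2" by blast
      moreover have "4 * V n / \<epsilon>^2 \<le> 4 * ((A n + 16 / real n * (2 * Q n + 2)) * (4 / \<delta>1^2)) / \<epsilon>^2"
        using elim by (intro divide_right_mono mult_left_mono) auto
      ultimately show ?case by (simp add: h_def)
    qed
    then show "PY \<epsilon> \<longlonglongrightarrow> 0"
      by (intro tendsto_sandwich[OF _ _ tendsto_const h0]) (auto simp: PY_nn)
  qed
  have II: "(\<forall>\<epsilon>>0. PY \<epsilon> \<longlonglongrightarrow> 0) \<Longrightarrow> A \<longlonglongrightarrow> 0"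
  proof -
    assume PY0: "\<forall>\<epsilon>>0. PY \<epsilon> \<longlonglongrightarrow> 0"
    have V0: "V \<longlonglongrightarrow> 0"
    proof (rule tendsto_by_eps)
      fix r :: real assume r: "r > 0"
      define \<epsilon> where "\<epsilon> = sqrt r"
      have e: "\<epsilon> > 0" using r by (simp add: \<epsilon>_def)
      have e2: "\<epsilon>^2 = r" using r by (simp add: \<epsilon>_def)
      define g where "g n = (4 / \<delta>1^2) * (2 * Q n + 2 * (PY (\<epsilon>/2) n + 4 * Q n / \<epsilon>^2))" for n
      have e2': "\<epsilon>/2 > 0" using e by simp
      have PYt: "PY (\<epsilon>/2) \<longlonglongrightarrow> 0" using PY0 e2' by blast
      have "g \<longlonglongrightarrow> (4 / \<delta>1^2) * (2 * 0 + 2 * (0 + 4 * 0 / \<epsilon>^2))" unfolding g_def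
        by (intro tendsto_intros Q0 PYt) (use e in simp)
      then have "g \<longlonglongrightarrow> 0" by simp
      moreover have "eventually (\<lambda>n. \<bar>V n\<bar> \<le> r + g n) sequentially"
        using bV5[OF e] bV0
      proof eventually_elim
        case (elim n)
        then have "V n \<le> \<epsilon>^2 + g n" "0 \<le> V n" by (simp_all add: g_def)
        then show ?case using e2 by simp
      qed
      ultimately show "\<exists>g. g \<longlonglongrightarrow> 0 \<and> eventually (\<lambda>n. \<bar>V n\<bar> \<le> r + g n) sequentially" by blast
    qed
    have "(\<lambda>n. (2 / \<kappa>) * (V n + 16 / real n * (2 * Q n + 2))) \<longlonglongrightarrow> (2 / \<kappa>) * (0 + 0 * (2 * 0 + 2))"
      by (intro tendsto_intros V0 invn Q0)
    then have "(\<lambda>n. (2 / \<kappa>) * (V n + 16 / real n * (2 * Q n + 2))) \<longlonglongrightarrow> 0" by simp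
    with bA0 bA show "A \<longlonglongrightarrow> 0" by (rule tendsto_sandwich[OF _ _ tendsto_const])
  qed
  have III: "A \<longlonglongrightarrow> 0 \<Longrightarrow> (\<forall>\<epsilon>>0. PZ \<epsilon> \<longlonglongrightarrow> 0)"
  proof (intro allI impI)
    fix \<epsilon> :: real assume A0: "A \<longlonglongrightarrow> 0" and e: "\<epsilon> > 0"
    have "(\<lambda>n. 16 * Q n + 4 * A n / \<epsilon>^2) \<longlonglongrightarrow> 16 * 0 + 4 * 0 / \<epsilon>^2"
      using e by (intro tendsto_intros A0 Q0) auto
    then have h0: "(\<lambda>n. 16 * Q n + 4 * A n / \<epsilon>^2) \<longlonglongrightarrow> 0" by simp
    have "eventually (\<lambda>n. PZ \<epsilon> n \<le> 16 * Q n + 4 * A n / \<epsilon>^2) sequentially"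
      using bPZ[OF e] .
    then show "PZ \<epsilon> \<longlonglongrightarrow> 0"
      by (intro tendsto_sandwich[OF _ _ tendsto_const h0]) (auto simp: PZ_nn)
  qed
  have IV: "(\<forall>\<epsilon>>0. PZ \<epsilon> \<longlonglongrightarrow> 0) \<Longrightarrow> A \<longlonglongrightarrow> 0"
  proof (rule tendsto_by_eps)
    fix r :: real assume PZ0: "\<forall>\<epsilon>>0. PZ \<epsilon> \<longlonglongrightarrow> 0" and r: "r > 0"
    define \<epsilon> where "\<epsilon> = sqrt (r/2)"
    have e: "\<epsilon> > 0" using r by (simp add: \<epsilon>_def)
    have e2: "2 * \<epsilon>^2 = r" using r by (simp add: \<epsilon>_def)
    define g where "g n = 4 * Q n + 4 * PZ \<epsilon> n" for n
    have "PZ \<epsilon> \<longlonglongrightarrow> 0" using PZ0 e by simp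
    then have "g \<longlonglongrightarrow> 4 * 0 + 4 * 0" unfolding g_def
      by (intro tendsto_intros Q0)
    then have "g \<longlonglongrightarrow> 0" by simp
    moreover have "eventually (\<lambda>n. \<bar>A n\<bar> \<le> r + g n) sequentially"
      using bA7[OF e] bA0
    proof eventually_elim
      case (elim n)
      then show ?case using e2 by (simp add: g_def)
    qed
    ultimately show "\<exists>g. g \<longlonglongrightarrow> 0 \<and> eventually (\<lambda>n. \<bar>A n\<bar> \<le> r + g n) sequentially" by blast
  qed
  show ?thesis unfolding convY convZ Aeq using I II III IV by blast
qed


end
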